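(* Let $\mu$ be a finite Borel measure on $(-\pi,\pi)$ and $\mu^\#$ its symmetrization. Then $u_\mu^\star(t)\le u_{\mu^\#}^\star(t)$ for all $t\in[0,2\pi]$.
   Context: A "Borel measure on $(-\pi,\pi)$" means a positive, non-zero measure on the Borel sets of $(-\pi,\pi)$; $\lambda$ is Lebesgue measure. $G(x,y)=-\frac{xy}{2\pi}-\frac12|x-y|+\frac{\pi}{2}$ on $[-\pi,\pi]^2$, $u_\mu(x)=\int G(x,y)\,d\mu(y)$. Write $\mu=\nu+\sigma+\delta$ (unique decomposition) with $d\nu=f\,d\lambda$, $0\le f\in L^1[-\pi,\pi]$, $\sigma\perp\lambda$ atomless, $\delta$ purely discontinuous. $f^\#(t)=f^*(2|t|)$ where $f^*(t)=\inf\{s:\lambda(\{f>s\})\le t\}$ for $t\in(0,2\pi)$ (with $f^*(0)=\operatorname{ess\,sup}f$, $f^*(2\pi)=\operatorname{ess\,inf}f$). Symmetrization: $d\mu^\#=f^\#\,d\lambda+M\,d\delta_0$ with $M=\sigma((-\pi,\pi))+\delta((-\pi,\pi))$. Star function: $g^\star(t)=\sup\{\int_E g\,d\lambda:E\subset[-\pi,\pi]\text{ Borel},\lambda(E)=t\}$, $t\in[0,2\pi]$. *)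

theory Defs
  imports "HOL-Analysis.Analysis" "HOL-Probability.Essential_Supremum"
begin

definition G :: "real \<Rightarrow> real \<Rightarrow> real" where
  "G x y = - (x * y) / (2 * pi) - \<bar>x - y\<bar> / 2 + pi / 2"

definition u_pot :: "real measure \<Rightarrow> real \<Rightarrow> real" where
  "u_pot \<mu> x = (\<integral>y. G x y \<partial>\<mu>)"

definition star_fun :: "(real \<Rightarrow> real) \<Rightarrow> real \<Rightarrow> real" where
  "star_fun g t = Sup {(LINT x:E|lborel. g x) | E. E \<in> sets borel \<and> E \<subseteq> {-pi..pi} \<and> measure lborel E = t}"

definition decr_rearr :: "(real \<Rightarrow> real) \<Rightarrow> real \<Rightarrow> real" where
  "decr_rearr f t =
     (if t = 0 then real_of_ereal (esssup (restrict_space lborel {-pi..pi}) (\<lambda>x. ereal (f x)))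
      else if t = 2 * pi then real_of_ereal (- esssup (restrict_space lborel {-pi..pi}) (\<lambda>x. - ereal (f x)))
      else Inf {s. measure lborel {x \<in> {-pi..pi}. f x > s} \<le> t})"

definition sym_rearr :: "(real \<Rightarrow> real) \<Rightarrow> real \<Rightarrow> real" where
  "sym_rearr f t = decr_rearr f (2 * \<bar>t\<bar>)"

text \<open>Symmetrization mu^# = f^# d lambda (on (-pi,pi)) + M delta_0, as a Borel measure on the real line.\<close>
definition sym_measure :: "(real \<Rightarrow> real) \<Rightarrow> real \<Rightarrow> real measure" where
  "sym_measure f M = measure_of UNIV (sets borel)
     (\<lambda>A. (\<integral>\<^sup>+x. ennreal (indicator {-pi<..<pi} x * sym_rearr f x) * indicator A x \<partial>lborel)
          + ennreal M * indicator A 0)"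

end

theory Submission
  imports Defs "HOL-Probability.Giry_Monad"
begin

lemma G_alt_le: "x \<le> y \<Longrightarrow> G x y = (pi + x) * (pi - y) / (2 * pi)"
  unfolding G_def by (simp add: field_simps abs_if)

lemma G_sym: "G x y = G y x"
  unfolding G_def by (simp add: abs_minus_commute mult.commute)

lemma G_nonneg: assumes "x \<in> {-pi..pi}" "y \<in> {-pi..pi}" shows "0 \<le> G x y"
proof (cases "x \<le> y")
  case True
  then show ?thesis using assms by (simp add: G_alt_le)
next
  case False
  then show ?thesis using assms G_alt_le[of y x] by (simp add: G_sym)
qed

lemma G_le: assumes "x \<in> {-pi..pi}" "y \<in> {-pi..pi}" shows "G x y \<le> pi / 2"
proof -
  have k: "G x y \<le> pi/2" if "x \<le> y" "x \<in> {-pi..pi}" "y \<in> {-pi..pi}" for x y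
  proof -
    have "(pi + x) * (pi - y) \<le> (pi + y) * (pi - y)"
      using that by (intro mult_right_mono) auto
    also have "\<dots> \<le> pi * pi" by (simp add: algebra_simps)
    finally have "(pi + x) * (pi - y) / (2*pi) \<le> pi*pi/(2*pi)"
      by (intro divide_right_mono) auto
    then show ?thesis using that by (simp add: G_alt_le)
  qed
  show ?thesis
    using k[of x y] k[of y x] assms G_sym[of x y] by (cases "x \<le> y") auto
qed

lemma G_lip: assumes "\<bar>x\<bar> \<le> pi" shows "\<bar>G x y - G x y'\<bar> \<le> \<bar>y - y'\<bar>"
proof -
  have "G x y - G x y' = - x * (y - y') / (2*pi) - (\<bar>x - y\<bar> - \<bar>x - y'\<bar>)/2"
    unfolding G_def by (simp add: field_simps)
  also have "\<bar>\<dots>\<bar> \<le> \<bar>x * (y - y') / (2*pi)\<bar> + \<bar>(\<bar>x - y\<bar> - \<bar>x - y'\<bar>)/2\<bar>"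
    by (simp add: abs_if)
  also have "\<bar>x * (y - y') / (2*pi)\<bar> \<le> \<bar>y - y'\<bar> / 2"
  proof -
    have "\<bar>x * (y - y')\<bar> \<le> pi * \<bar>y - y'\<bar>" using assms
      by (simp add: abs_mult mult_right_mono)
    then show ?thesis by (simp add: field_simps abs_divide)
  qed
  also have "\<bar>(\<bar>x - y\<bar> - \<bar>x - y'\<bar>)/2\<bar> \<le> \<bar>y - y'\<bar> / 2" by simp
  finally show ?thesis by simp
qed

lemma G_conc_aux: "(z - x) * G w y - ((z - y) * G w x + (y - x) * G w z)
        = ((z - y) * \<bar>w - x\<bar> + (y - x) * \<bar>w - z\<bar> - (z - x) * \<bar>w - y\<bar>) / 2"
proof -
  have "(z - x) * G w y - ((z - y) * G w x + (y - x) * G w z) =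
     (z - x) * (- (w * y) / (2 * pi)) - ((z - y) * (- (w * x) / (2 * pi)) + (y - x) * (- (w * z) / (2 * pi)))
    + ((z - y) * \<bar>w - x\<bar> + (y - x) * \<bar>w - z\<bar> - (z - x) * \<bar>w - y\<bar>) / 2"
    unfolding G_def by (simp add: algebra_simps add_divide_distrib diff_divide_distrib)
  also have "(z - x) * (- (w * y) / (2 * pi)) - ((z - y) * (- (w * x) / (2 * pi)) + (y - x) * (- (w * z) / (2 * pi))) = 0"
    by (simp add: field_simps)
  finally show ?thesis by simp
qed

lemma G_conc:
  assumes "x < y" "y < z"
  shows "(z - y) * G w x + (y - x) * G w z \<le> (z - x) * G w y"
proof -
  have e: "(z - x) * (w - y) = (z - y) * (w - x) + (y - x) * (w - z)" by (simp add: algebra_simps)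
  have "(z - x) * \<bar>w - y\<bar> = \<bar>(z - x) * (w - y)\<bar>" using assms by (simp add: abs_mult)
  also have "\<dots> = \<bar>(z - y) * (w - x) + (y - x) * (w - z)\<bar>" by (simp only: e)
  also have "\<dots> \<le> \<bar>(z - y) * (w - x)\<bar> + \<bar>(y - x) * (w - z)\<bar>"
    by (rule abs_triangle_ineq)
  also have "\<dots> = (z - y) * \<bar>w - x\<bar> + (y - x) * \<bar>w - z\<bar>"
    using assms by (simp add: abs_mult)
  finally have A: "(z - x) * \<bar>w - y\<bar> \<le> (z - y) * \<bar>w - x\<bar> + (y - x) * \<bar>w - z\<bar>" .
  show ?thesis using A G_conc_aux[of z x w y] by simp
qed

lemma continuous_G2: "continuous_on S (\<lambda>y. G x y)"
  unfolding G_def by (intro continuous_intros) auto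

lemma continuous_G1: "continuous_on S (\<lambda>x. G x y)"
  unfolding G_def by (intro continuous_intros) auto

lemma continuous_G_pair: "continuous_on UNIV (\<lambda>p. G (fst p) (snd p))"
  unfolding G_def by (intro continuous_intros) auto

lemma G_measurable_pair:
  assumes "sets M = sets borel" "sets N = sets borel"
  shows "(\<lambda>(x,y). G x y) \<in> borel_measurable (M \<Otimes>\<^sub>M N)"
proof -
  have 1: "(\<lambda>p. G (fst p) (snd p)) \<in> borel_measurable (borel :: (real*real) measure)"
    by (rule borel_measurable_continuous_onI[OF continuous_G_pair])
  have S: "sets (M \<Otimes>\<^sub>M N) = sets (borel :: (real*real) measure)"
  proof -
    have "sets (M \<Otimes>\<^sub>M N) = sets (borel \<Otimes>\<^sub>M borel :: (real*real) measure)"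
      using assms by (intro sets_pair_measure_cong) auto
    then show ?thesis by (simp only: borel_prod)
  qed
  have eq: "borel_measurable (M \<Otimes>\<^sub>M N) = borel_measurable (borel::(real*real) measure)"
    by (rule measurable_cong_sets[OF S refl])
  have 2: "(\<lambda>(x,y). G x y) = (\<lambda>p. G (fst p) (snd p))" by (simp add: case_prod_beta')
  show ?thesis unfolding eq 2 by (rule 1)
qed

lemma DERIV_xabs: "((\<lambda>z::real. z * \<bar>z\<bar>) has_real_derivative 2 * \<bar>z\<bar>) (at z)"
proof (cases "z = 0")
  case True
  have "((\<lambda>h. (h * \<bar>h\<bar> - 0 * \<bar>0\<bar>) / (h - 0)) \<longlongrightarrow> 2 * \<bar>0::real\<bar>) (at 0)"
  proof -
    have "((\<lambda>h::real. \<bar>h\<bar>) \<longlongrightarrow> \<bar>0\<bar>) (at 0)"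
      by (intro tendsto_intros)
    then have "((\<lambda>h::real. \<bar>h\<bar>) \<longlongrightarrow> 0) (at 0)" by simp
    moreover have "\<forall>\<^sub>F h in at (0::real). \<bar>h\<bar> = (h * \<bar>h\<bar> - 0 * \<bar>0\<bar>) / (h - 0)"
      by (auto simp: eventually_at_filter)
    ultimately show ?thesis by (simp add: tendsto_cong)
  qed
  then show ?thesis using True by (simp add: has_field_derivative_iff)
next
  case False
  show ?thesis
  proof (cases "z > 0")
    case True
    have "((\<lambda>z. z * z) has_real_derivative 2 * \<bar>z\<bar>) (at z)"
      using True by (auto intro!: derivative_eq_intros)
    then show ?thesis
      by (rule has_field_derivative_transform_within_open[where S="{0<..}"]) (use True in auto)
  next
    case False': False
    then have zn: "z < 0" using False by auto
    have "((\<lambda>z. - (z * z)) has_real_derivative 2 * \<bar>z\<bar>) (at z)"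
      using zn by (auto intro!: derivative_eq_intros)
    then show ?thesis
      by (rule has_field_derivative_transform_within_open[where S="{..<0}"]) (use zn in auto)
  qed
qed

lemma DERIV_abs3: "((\<lambda>z::real. \<bar>z\<bar>^3) has_real_derivative 3 * (z * \<bar>z\<bar>)) (at z)"
proof (cases "z = 0")
  case True
  have "((\<lambda>h. (\<bar>h\<bar>^3 - \<bar>0\<bar>^3) / (h - 0)) \<longlongrightarrow> 3 * (0 * \<bar>0::real\<bar>)) (at 0)"
  proof -
    have "((\<lambda>h::real. h * \<bar>h\<bar>) \<longlongrightarrow> 0 * \<bar>0\<bar>) (at 0)"
      by (intro tendsto_intros)
    then have "((\<lambda>h::real. h * \<bar>h\<bar>) \<longlongrightarrow> 0) (at 0)" by simp
    moreover have "\<forall>\<^sub>F h in at (0::real). h * \<bar>h\<bar> = (\<bar>h\<bar>^3 - \<bar>0\<bar>^3) / (h - 0)"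
      by (auto simp: eventually_at_filter power3_eq_cube abs_if)
    ultimately show ?thesis by (simp add: tendsto_cong)
  qed
  then show ?thesis using True by (simp add: has_field_derivative_iff)
next
  case False
  show ?thesis
  proof (cases "z > 0")
    case True
    have "((\<lambda>z. z^3) has_real_derivative 3 * (z * \<bar>z\<bar>)) (at z)"
      using True by (auto intro!: derivative_eq_intros simp: power2_eq_square)
    then show ?thesis
      by (rule has_field_derivative_transform_within_open[where S="{0<..}"]) (use True in auto)
  next
    case False': False
    then have zn: "z < 0" using False by auto
    have "((\<lambda>z. - (z^3)) has_real_derivative 3 * (z * \<bar>z\<bar>)) (at z)"
      using zn by (auto intro!: derivative_eq_intros simp: power2_eq_square)
    then show ?thesis
      by (rule has_field_derivative_transform_within_open[where S="{..<0}"]) (use zn in \<open>auto simp: power3_eq_cube\<close>)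
  qed
qed

definition F1 :: "real \<Rightarrow> real \<Rightarrow> real \<Rightarrow> real" where
  "F1 a b y = pi*(b-a)/2 - y*(b^2-a^2)/(4*pi) - ((b-y)*\<bar>b-y\<bar> - (a-y)*\<bar>a-y\<bar>)/4"

lemma int_G_interval:
  assumes "a \<le> b"
  shows "(LINT x:{a..b}|lborel. G x y) = F1 a b y"
proof -
  define F where "F x = pi*x/2 - x^2*y/(4*pi) - (x-y)*\<bar>x-y\<bar>/4" for x
  have d: "(F has_real_derivative G x y) (at x)" for x
  proof -
    have d1: "((\<lambda>x. (x-y)*\<bar>x-y\<bar>) has_real_derivative 2*\<bar>x-y\<bar> * 1) (at x)"
    proof -
      have "((\<lambda>x. x - y) has_real_derivative 1) (at x)" by (auto intro!: derivative_eq_intros)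
      from DERIV_chain2[OF DERIV_xabs this] show ?thesis by simp
    qed
    have "(F has_real_derivative (pi/2 - (2*x*y)/(4*pi) - 2*\<bar>x-y\<bar> * 1/4)) (at x)"
      unfolding F_def
      by (rule DERIV_diff[OF _ DERIV_cdivide[OF d1]]) (auto intro!: derivative_eq_intros)
    moreover have "pi/2 - (2*x*y)/(4*pi) - 2*\<bar>x-y\<bar> * 1/4 = G x y"
      unfolding G_def by (simp add: field_simps)
    ultimately show ?thesis by simp
  qed
  have e: "F b - F a = F1 a b y" unfolding F_def F1_def by (simp add: field_simps power2_eq_square)
  have "(LBINT x. indicator {a..b} x *\<^sub>R G x y) = F b - F a"
    by (rule integral_FTC_atLeastAtMost[OF assms])
       (auto simp: has_real_derivative_iff_has_vector_derivative[symmetric]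
             intro!: DERIV_subset[OF d] continuous_G1)
  then show ?thesis unfolding set_lebesgue_integral_def e .
qed

definition Psi :: "real \<Rightarrow> real \<Rightarrow> real \<Rightarrow> real \<Rightarrow> real" where
  "Psi j1 j2 k1 k2 = pi*(k2-k1)*(j2-j1)/2 - (j2^2-j1^2)*(k2^2-k1^2)/(8*pi)
     + (\<bar>k2-j2\<bar>^3 - \<bar>k1-j2\<bar>^3 - \<bar>k2-j1\<bar>^3 + \<bar>k1-j1\<bar>^3)/12"

lemma int_F1_interval:
  assumes "j1 \<le> j2"
  shows "(LINT y:{j1..j2}|lborel. F1 k1 k2 y) = Psi j1 j2 k1 k2"
proof -
  define P where "P y = pi*(k2-k1)*y/2 - y^2*(k2^2-k1^2)/(8*pi) + (\<bar>k2-y\<bar>^3 - \<bar>k1-y\<bar>^3)/12" for y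
  have d: "(P has_real_derivative F1 k1 k2 y) (at y)" for y
  proof -
    have dk: "((\<lambda>y. \<bar>k-y\<bar>^3) has_real_derivative 3*((k-y)*\<bar>k-y\<bar>) * (-1)) (at y)" for k
    proof -
      have "((\<lambda>y. k - y) has_real_derivative -1) (at y)" by (auto intro!: derivative_eq_intros)
      from DERIV_chain2[OF DERIV_abs3 this] show ?thesis by simp
    qed
    have "(P has_real_derivative (pi*(k2-k1)/2 - 2*y*(k2^2-k1^2)/(8*pi)
            + (3*((k2-y)*\<bar>k2-y\<bar>) * (-1) - 3*((k1-y)*\<bar>k1-y\<bar>) * (-1))/12)) (at y)"
      unfolding P_def
      by (rule DERIV_add[OF _ DERIV_cdivide[OF DERIV_diff[OF dk dk]]]) (auto intro!: derivative_eq_intros)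
    moreover have "pi*(k2-k1)/2 - 2*y*(k2^2-k1^2)/(8*pi)
            + (3*((k2-y)*\<bar>k2-y\<bar>) * (-1) - 3*((k1-y)*\<bar>k1-y\<bar>) * (-1))/12 = F1 k1 k2 y"
      unfolding F1_def by (simp add: field_simps)
    ultimately show ?thesis by simp
  qed
  have c: "continuous_on {j1..j2} (F1 k1 k2)"
    unfolding F1_def by (intro continuous_intros) auto
  have e: "P j2 - P j1 = Psi j1 j2 k1 k2" unfolding P_def Psi_def by (simp add: field_simps)
  have "(LBINT y. indicator {j1..j2} y *\<^sub>R F1 k1 k2 y) = P j2 - P j1"
    by (rule integral_FTC_atLeastAtMost[OF assms])
       (auto simp: has_real_derivative_iff_has_vector_derivative[symmetric]
             intro!: DERIV_subset[OF d] c)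
  then show ?thesis unfolding set_lebesgue_integral_def e .
qed

lemma core_ii:
  fixes u w d :: real
  assumes "0 \<le> w" "w \<le> d" "d \<le> u" "u + w \<le> 2*pi"
  shows "6*(u^2-w^2)*d^2/(4*pi) \<le> 6*u*d^2 - 2*d^3 - 6*d*w^2 + 2*w^3"
proof -
  have p: "pi > 0" by simp
  have a1: "(u^2-w^2)/(4*pi) \<le> (u - w)/2"
  proof -
    have "u^2-w^2 = (u-w)*(u+w)" by (simp add: algebra_simps power2_eq_square)
    also have "\<dots> \<le> (u-w)*(2*pi)" using assms by (intro mult_left_mono) auto
    finally show ?thesis using p by (simp add: field_simps)
  qed
  have "6*(u^2-w^2)*d^2/(4*pi) = 6*d^2*((u^2-w^2)/(4*pi))" by (simp add: field_simps)
  also have "\<dots> \<le> 6*d^2*((u - w)/2)" using a1 by (intro mult_left_mono) auto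
  also have "\<dots> = 3*(u-w)*d^2" by simp
  finally have A: "6*(u^2-w^2)*d^2/(4*pi) \<le> 3*(u-w)*d^2" .
  have B: "(d-w)^3 \<le> (u-w)*d^2"
  proof -
    have "(d-w)^3 = (d-w)*(d-w)^2" by (simp add: power3_eq_cube power2_eq_square)
    also have "\<dots> \<le> (u-w)*(d-w)^2" using assms by (intro mult_right_mono) auto
    also have "\<dots> \<le> (u-w)*d^2" using assms by (intro mult_left_mono power_mono) auto
    finally show ?thesis .
  qed
  have C: "6*u*d^2 - 2*d^3 - 6*d*w^2 + 2*w^3 = 6*(u-w)*d^2 - 2*(d-w)^3"
    by (simp add: algebra_simps power3_eq_cube power2_eq_square)
  have "0 \<le> (u-w)*d^2" using assms by simp
  then show ?thesis using A B C by linarith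
qed

lemma core_pos:
  fixes u w d :: real
  assumes "0 \<le> w" "w \<le> u" "u + w \<le> 2*pi" "0 \<le> d" "d + u \<le> 2*pi"
  shows "6*(u^2-w^2)*d^2/(4*pi) \<le> \<bar>u-d\<bar>^3 + \<bar>u+d\<bar>^3 - \<bar>d+w\<bar>^3 - \<bar>d-w\<bar>^3 - (2*u^3 - 2*w^3)"
proof -
  have p: "pi > 0" by simp
  consider "d \<le> w" | "w \<le> d" "d \<le> u" | "u \<le> d" by linarith
  then show ?thesis
  proof cases
    case 1
    have e: "\<bar>u-d\<bar>^3 + \<bar>u+d\<bar>^3 - \<bar>d+w\<bar>^3 - \<bar>d-w\<bar>^3 - (2*u^3 - 2*w^3) = 6*(u-w)*d^2"
    proof -
      have "\<bar>u-d\<bar> = u - d" "\<bar>u+d\<bar> = u+d" "\<bar>d+w\<bar> = d+w" "\<bar>d-w\<bar> = w-d"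
        using 1 assms by auto
      then show ?thesis by (simp add: algebra_simps power3_eq_cube power2_eq_square)
    qed
    have a1: "(u^2-w^2)/(4*pi) \<le> (u - w)"
    proof -
      have "u^2-w^2 = (u-w)*(u+w)" by (simp add: algebra_simps power2_eq_square)
      also have "\<dots> \<le> (u-w)*(4*pi)" using assms p by (intro mult_left_mono) auto
      finally show ?thesis using p by (simp add: field_simps)
    qed
    have "6*(u^2-w^2)*d^2/(4*pi) = 6*d^2*((u^2-w^2)/(4*pi))" by (simp add: field_simps)
    also have "\<dots> \<le> 6*d^2*(u - w)" using a1 by (intro mult_left_mono) auto
    finally show ?thesis using e by (simp add: algebra_simps)
  next
    case 2
    have e: "\<bar>u-d\<bar>^3 + \<bar>u+d\<bar>^3 - \<bar>d+w\<bar>^3 - \<bar>d-w\<bar>^3 - (2*u^3 - 2*w^3)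
             = 6*u*d^2 - 2*d^3 - 6*d*w^2 + 2*w^3"
    proof -
      have "\<bar>u-d\<bar> = u - d" "\<bar>u+d\<bar> = u+d" "\<bar>d+w\<bar> = d+w" "\<bar>d-w\<bar> = d-w"
        using 2 assms by auto
      then show ?thesis by (simp add: algebra_simps power3_eq_cube power2_eq_square)
    qed
    show ?thesis unfolding e using core_ii[of w d u] 2 assms by simp
  next
    case 3
    have e: "\<bar>u-d\<bar>^3 + \<bar>u+d\<bar>^3 - \<bar>d+w\<bar>^3 - \<bar>d-w\<bar>^3 - (2*u^3 - 2*w^3)
             = 6*d*(u^2-w^2) - 2*(u^3-w^3)"
    proof -
      have "\<bar>u-d\<bar> = d - u" "\<bar>u+d\<bar> = u+d" "\<bar>d+w\<bar> = d+w" "\<bar>d-w\<bar> = d-w"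
        using 3 assms by auto
      then show ?thesis by (simp add: algebra_simps power3_eq_cube power2_eq_square)
    qed
    have ii: "6*(u^2-w^2)*u^2/(4*pi) \<le> 6*u*u^2 - 2*u^3 - 6*u*w^2 + 2*w^3"
      using core_ii[of w u u] assms by simp
    have P: "0 \<le> u^2-w^2" using assms by (simp add: power_mono)
    have m: "u*(1 - u/(4*pi)) \<le> d*(1 - d/(4*pi))"
    proof -
      have "d*(1 - d/(4*pi)) - u*(1 - u/(4*pi)) = (d-u)*(1 - (d+u)/(4*pi))"
        using p by (simp add: field_simps power2_eq_square)
      also have "\<dots> \<ge> 0" using 3 assms p by (intro mult_nonneg_nonneg) (auto simp: field_simps)
      finally show ?thesis by simp
    qed
    have "6*(u^2-w^2)*d^2/(4*pi) = 6*(u^2-w^2)*d - 6*(u^2-w^2)*(d*(1 - d/(4*pi)))"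
      using p by (simp add: field_simps power2_eq_square)
    also have "\<dots> \<le> 6*(u^2-w^2)*d - 6*(u^2-w^2)*(u*(1 - u/(4*pi)))"
      using m P by (simp add: mult_left_mono)
    also have "6*(u^2-w^2)*(u*(1 - u/(4*pi))) = 6*(u^2-w^2)*u - 6*(u^2-w^2)*u^2/(4*pi)"
      using p by (simp add: field_simps power2_eq_square)
    finally have "6*(u^2-w^2)*d^2/(4*pi) \<le> 6*(u^2-w^2)*d - 6*(u^2-w^2)*u + 6*(u^2-w^2)*u^2/(4*pi)"
      by simp
    also have "\<dots> \<le> 6*(u^2-w^2)*d - 6*(u^2-w^2)*u + (6*u*u^2 - 2*u^3 - 6*u*w^2 + 2*w^3)"
      using ii by simp
    also have "\<dots> = 6*d*(u^2-w^2) - 2*(u^3-w^3)"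
      by (simp add: algebra_simps power3_eq_cube power2_eq_square)
    finally show ?thesis using e by simp
  qed
qed

lemma core:
  fixes u w d :: real
  assumes "\<bar>w\<bar> \<le> u" "u + \<bar>w\<bar> \<le> 2*pi" "\<bar>d\<bar> + u \<le> 2*pi"
  shows "6*(u^2-w^2)*d^2/(4*pi) \<le> \<bar>u-d\<bar>^3 + \<bar>u+d\<bar>^3 - \<bar>d+w\<bar>^3 - \<bar>d-w\<bar>^3 - (2*u^3 - 2*\<bar>w\<bar>^3)"
proof -
  have c: "6*(u^2-\<bar>w\<bar>^2)*\<bar>d\<bar>^2/(4*pi) \<le> \<bar>u-\<bar>d\<bar>\<bar>^3 + \<bar>u+\<bar>d\<bar>\<bar>^3 - \<bar>\<bar>d\<bar>+\<bar>w\<bar>\<bar>^3 - \<bar>\<bar>d\<bar>-\<bar>w\<bar>\<bar>^3 - (2*u^3 - 2*\<bar>w\<bar>^3)"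
    by (rule core_pos) (use assms in auto)
  have s1: "\<bar>u-\<bar>d\<bar>\<bar>^3 + \<bar>u+\<bar>d\<bar>\<bar>^3 = \<bar>u-d\<bar>^3 + \<bar>u+d\<bar>^3"
    by (cases "d \<ge> 0") (auto simp: abs_minus_commute add.commute)
  have s2: "\<bar>\<bar>d\<bar>+\<bar>w\<bar>\<bar>^3 + \<bar>\<bar>d\<bar>-\<bar>w\<bar>\<bar>^3 = \<bar>d+w\<bar>^3 + \<bar>d-w\<bar>^3"
  proof (cases "d \<ge> 0"; cases "w \<ge> 0")
    assume "d \<ge> 0" "w \<ge> 0" then show ?thesis by simp
  next
    assume "d \<ge> 0" "\<not> w \<ge> 0" then show ?thesis by (simp add: add.commute)
  next
    assume "\<not> d \<ge> 0" "w \<ge> 0"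
    then have "\<bar>\<bar>d\<bar>+\<bar>w\<bar>\<bar> = \<bar>d-w\<bar>" "\<bar>\<bar>d\<bar>-\<bar>w\<bar>\<bar> = \<bar>d+w\<bar>" by auto
    then show ?thesis by simp
  next
    assume "\<not> d \<ge> 0" "\<not> w \<ge> 0"
    then have "\<bar>\<bar>d\<bar>+\<bar>w\<bar>\<bar> = \<bar>d+w\<bar>" "\<bar>\<bar>d\<bar>-\<bar>w\<bar>\<bar> = \<bar>d-w\<bar>" by auto
    then show ?thesis by simp
  qed
  have s3: "\<bar>w\<bar>^2 = w^2" "\<bar>d\<bar>^2 = d^2" by simp_all
  show ?thesis using c s1 s2 s3 by simp
qed

lemma Psi_le:
  assumes "-pi \<le> j1" "j1 \<le> j2" "j2 \<le> pi" "-pi \<le> k1" "k1 \<le> k2" "k2 \<le> pi"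
  shows "Psi j1 j2 k1 k2 \<le> Psi (-(j2-j1)/2) ((j2-j1)/2) (-(k2-k1)/2) ((k2-k1)/2)"
proof -
  define t a c d where "t = j2 - j1" "a = k2 - k1" "c = (j1+j2)/2" "d = (k1+k2)/2"
  define u w \<delta> where "u = (t+a)/2" "w = (t-a)/2" "\<delta> = c - d"
  have p: "pi > 0" by simp
  have j: "j1 = c - t/2" "j2 = c + t/2" "k1 = d - a/2" "k2 = d + a/2"
    by (simp_all add: t_a_c_d_def field_simps)
  have A1: "\<bar>k2-j2\<bar> = \<bar>\<delta>+w\<bar>" "\<bar>k1-j2\<bar> = \<bar>u+\<delta>\<bar>" "\<bar>k2-j1\<bar> = \<bar>u-\<delta>\<bar>" "\<bar>k1-j1\<bar> = \<bar>\<delta>-w\<bar>"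
  proof -
    have "k2-j2 = -(\<delta>+w)" "k1-j2 = -(u+\<delta>)" "k2-j1 = u-\<delta>" "k1-j1 = -(\<delta>-w)"
      unfolding j u_w_\<delta>_def by (simp_all add: field_simps)
    then show "\<bar>k2-j2\<bar> = \<bar>\<delta>+w\<bar>" "\<bar>k1-j2\<bar> = \<bar>u+\<delta>\<bar>" "\<bar>k2-j1\<bar> = \<bar>u-\<delta>\<bar>" "\<bar>k1-j1\<bar> = \<bar>\<delta>-w\<bar>"
      by (simp_all only: abs_minus_cancel)
  qed
  have A2: "\<bar>(k2-k1)/2 - (j2-j1)/2\<bar> = \<bar>w\<bar>" "\<bar>-(k2-k1)/2 - (j2-j1)/2\<bar> = u"
     "\<bar>(k2-k1)/2 - -(j2-j1)/2\<bar> = u" "\<bar>-(k2-k1)/2 - -(j2-j1)/2\<bar> = \<bar>w\<bar>"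
  proof -
    have e: "(k2-k1)/2 - (j2-j1)/2 = -w" "-(k2-k1)/2 - (j2-j1)/2 = -u"
     "(k2-k1)/2 - -(j2-j1)/2 = u" "-(k2-k1)/2 - -(j2-j1)/2 = w"
      unfolding u_w_\<delta>_def t_a_c_d_def by (simp_all add: field_simps)
    have u0: "u \<ge> 0" using assms unfolding u_w_\<delta>_def t_a_c_d_def by simp
    show "\<bar>(k2-k1)/2 - (j2-j1)/2\<bar> = \<bar>w\<bar>" "\<bar>-(k2-k1)/2 - (j2-j1)/2\<bar> = u"
     "\<bar>(k2-k1)/2 - -(j2-j1)/2\<bar> = u" "\<bar>-(k2-k1)/2 - -(j2-j1)/2\<bar> = \<bar>w\<bar>"
      unfolding e using u0 by simp_all
  qed
  have L: "Psi j1 j2 k1 k2 = pi*a*t/2 - t*a*c*d/(2*pi)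
      + (\<bar>\<delta>+w\<bar>^3 - \<bar>u+\<delta>\<bar>^3 - \<bar>u-\<delta>\<bar>^3 + \<bar>\<delta>-w\<bar>^3)/12"
  proof -
    have "(j2^2-j1^2)*(k2^2-k1^2)/(8*pi) = t*a*c*d/(2*pi)"
      unfolding j by (simp add: field_simps power2_eq_square)
    then show ?thesis unfolding Psi_def A1 by (simp add: t_a_c_d_def)
  qed
  have R: "Psi (-(j2-j1)/2) ((j2-j1)/2) (-(k2-k1)/2) ((k2-k1)/2) = pi*a*t/2 + (2*\<bar>w\<bar>^3 - 2*u^3)/12"
  proof -
    have "(((j2-j1)/2)^2-(-(j2-j1)/2)^2) = 0" by (simp add: power2_eq_square algebra_simps)
    then show ?thesis unfolding Psi_def A2 by (simp add: t_a_c_d_def algebra_simps)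
  qed
  have t0: "0 \<le> t" "0 \<le> a" using assms unfolding t_a_c_d_def by auto
  have cr: "6*(u^2-w^2)*\<delta>^2/(4*pi) \<le> \<bar>u-\<delta>\<bar>^3 + \<bar>u+\<delta>\<bar>^3 - \<bar>\<delta>+w\<bar>^3 - \<bar>\<delta>-w\<bar>^3 - (2*u^3 - 2*\<bar>w\<bar>^3)"
  proof (rule core)
    show "\<bar>w\<bar> \<le> u" using t0 unfolding u_w_\<delta>_def by auto
    show "u + \<bar>w\<bar> \<le> 2*pi" using assms unfolding u_w_\<delta>_def t_a_c_d_def by (auto simp: abs_if field_simps)
    show "\<bar>\<delta>\<bar> + u \<le> 2*pi" using assms unfolding u_w_\<delta>_def t_a_c_d_def by (auto simp: abs_if field_simps)
  qed
  have uw: "u^2 - w^2 = t*a" unfolding u_w_\<delta>_def by (simp add: field_simps power2_eq_square)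
  have key: "t*a*c*d/(2*pi) + 6*(t*a)*\<delta>^2/(4*pi)/12 = t*a*(c+d)^2/(8*pi)"
    unfolding u_w_\<delta>_def using p by (simp add: field_simps power2_eq_square)
  have "0 \<le> t*a*(c+d)^2/(8*pi)" using t0 p by simp
  then show ?thesis unfolding L R using cr key uw by (simp add: field_simps)
qed

lemma sing_B:
  fixes t c e :: real
  assumes "0 \<le> t" "t/2 \<le> e" "e + t/2 \<le> 2*pi" "t \<le> 2*pi"
  shows "t^2/8 \<le> (c+e)*t*c/(2*pi) + t*e/2"
proof -
  have p: "pi > 0" by simp
  have h1: "0 \<le> (e - t/2)*(pi - (e+t/2)/4)" using assms by (intro mult_nonneg_nonneg) auto
  have h2: "0 \<le> t*(4*pi - t)/16" using assms by (intro divide_nonneg_nonneg mult_nonneg_nonneg) auto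
  have h3: "- (e^2)/4 + pi*e - pi*t/4 = (e - t/2)*(pi - (e+t/2)/4) + t*(4*pi - t)/16"
    by (simp add: field_simps power2_eq_square)
  have h4: "0 \<le> - (e^2)/4 + pi*e - pi*t/4" using h1 h2 h3 by linarith
  have h5: "(c+e)*c/(2*pi) + e/2 - t/8 = (c+e/2)^2/(2*pi) + (- (e^2)/4 + pi*e - pi*t/4)/(2*pi)"
    using p by (simp add: field_simps power2_eq_square)
  have "0 \<le> (c+e)*c/(2*pi) + e/2 - t/8" unfolding h5 using h4 p by simp
  then have "0 \<le> t * ((c+e)*c/(2*pi) + e/2 - t/8)" using assms by simp
  then show ?thesis by (simp add: field_simps power2_eq_square)
qed

lemma F1_le:
  assumes "-pi \<le> a" "a \<le> b" "b \<le> pi" "-pi \<le> y" "y \<le> pi"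
  shows "F1 a b y \<le> pi*(b-a)/2 - (b-a)^2/8"
proof -
  define t c e where "t = b - a" "c = (a+b)/2" "e = y - c"
  have p: "pi > 0" by simp
  have ab: "a = c - t/2" "b = c + t/2" "y = c + e" by (simp_all add: t_c_e_def field_simps)
  have t0: "0 \<le> t" "t \<le> 2*pi" using assms by (auto simp: t_c_e_def)
  have F: "F1 a b y = pi*t/2 - (c+e)*t*c/(2*pi)
      - ((t/2-e)*\<bar>t/2-e\<bar> + (t/2+e)*\<bar>t/2+e\<bar>)/4"
  proof -
    have e1: "(a-y)*\<bar>a-y\<bar> = -((t/2+e)*\<bar>t/2+e\<bar>)"
    proof -
      have "a - y = -(t/2+e)" unfolding ab by simp
      then show ?thesis by (metis abs_minus_cancel mult_minus_left)
    qed
    have e2: "b - y = t/2 - e" unfolding ab by simp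
    have e3: "y*(b^2-a^2)/(4*pi) = (c+e)*t*c/(2*pi)"
      unfolding ab using p by (simp add: field_simps power2_eq_square)
    have bt: "b - a = t" by (simp add: t_c_e_def)
    show ?thesis unfolding F1_def e3 e1 e2 bt by simp
  qed
  have "t^2/8 \<le> (c+e)*t*c/(2*pi) + ((t/2-e)*\<bar>t/2-e\<bar> + (t/2+e)*\<bar>t/2+e\<bar>)/4"
  proof -
    consider "\<bar>e\<bar> \<le> t/2" | "t/2 < e" | "e < -t/2" by linarith
    then show ?thesis
    proof cases
      case 1
      have q: "((t/2-e)*\<bar>t/2-e\<bar> + (t/2+e)*\<bar>t/2+e\<bar>)/4 = t^2/8 + e^2/2"
      proof -
        have a1: "\<bar>t/2-e\<bar> = t/2-e" and a2: "\<bar>t/2+e\<bar> = t/2+e" using 1 by auto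
        show ?thesis unfolding a1 a2 by (simp add: field_simps power2_eq_square)
      qed
      have h1: "0 \<le> t*(c+e/2)^2 + (pi - t/4)*e^2" using t0 by (intro add_nonneg_nonneg mult_nonneg_nonneg) auto
      have h2: "(c+e)*t*c/(2*pi) + e^2/2 = (t*(c+e/2)^2 + (pi - t/4)*e^2)/(2*pi)"
        using p by (simp add: field_simps power2_eq_square)
      have "0 \<le> (c+e)*t*c/(2*pi) + e^2/2" unfolding h2 using h1 p by simp
      then show ?thesis unfolding q by linarith
    next
      case 2
      have q: "((t/2-e)*\<bar>t/2-e\<bar> + (t/2+e)*\<bar>t/2+e\<bar>)/4 = t*e/2"
      proof -
        have a1: "\<bar>t/2-e\<bar> = e - t/2" and a2: "\<bar>t/2+e\<bar> = t/2+e" using 2 t0 by auto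
        show ?thesis unfolding a1 a2 by (simp add: field_simps power2_eq_square)
      qed
      have "e + t/2 \<le> 2*pi" using assms unfolding t_c_e_def by (simp add: field_simps)
      then show ?thesis unfolding q using sing_B[of t e c] 2 t0 by simp
    next
      case 3
      have q: "((t/2-e)*\<bar>t/2-e\<bar> + (t/2+e)*\<bar>t/2+e\<bar>)/4 = t*(-e)/2"
      proof -
        have a1: "\<bar>t/2-e\<bar> = t/2 - e" and a2: "\<bar>t/2+e\<bar> = -(t/2+e)" using 3 t0 by auto
        show ?thesis unfolding a1 a2 by (simp add: field_simps power2_eq_square)
      qed
      have "(-e) + t/2 \<le> 2*pi" using assms unfolding t_c_e_def by (simp add: field_simps)
      then have "t^2/8 \<le> ((-c)+(-e))*t*(-c)/(2*pi) + t*(-e)/2"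
        using sing_B[of t "-e" "-c"] 3 t0 by simp
      then show ?thesis unfolding q by (simp add: algebra_simps)
    qed
  qed
  moreover have bt: "b - a = t" by (simp add: t_c_e_def)
  ultimately show ?thesis unfolding F bt by linarith
qed

lemma si_cont:
  fixes h :: "real \<Rightarrow> real"
  assumes "continuous_on {-pi..pi} h" "E \<in> sets borel" "E \<subseteq> {-pi..pi}"
  shows "set_integrable lborel E h"
  by (rule set_integrable_subset[OF borel_integrable_atLeastAtMost'[OF assms(1)]]) (use assms in auto)

lemma fin_sub:
  assumes "E \<in> sets borel" "E \<subseteq> {-pi..pi}"
  shows "emeasure lborel E \<le> ennreal (2*pi)" "emeasure lborel E < \<infinity>"
    "measure lborel E \<le> 2*pi" "E \<in> fmeasurable lborel"
proof -
  have "emeasure lborel E \<le> emeasure lborel {-pi..pi}" using assms by (intro emeasure_mono) auto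
  also have "\<dots> = ennreal (2*pi)" by simp
  finally show 1: "emeasure lborel E \<le> ennreal (2*pi)" .
  then show 2: "emeasure lborel E < \<infinity>" using le_less_trans[OF 1 ennreal_less_top] by simp
  have "enn2real (emeasure lborel E) \<le> enn2real (ennreal (2*pi))"
    by (rule enn2real_mono[OF 1]) simp
  then show "measure lborel E \<le> 2*pi" unfolding measure_def by simp
  show "E \<in> fmeasurable lborel" using 2 assms by (auto simp: fmeasurable_def)
qed

lemma si_null:
  fixes h :: "real \<Rightarrow> real"
  assumes "A \<in> sets borel" "A \<subseteq> {-pi..pi}" "measure lborel A = 0"
  shows "set_lebesgue_integral lborel A h = 0"
proof -
  have "emeasure lborel A = 0" using assms fin_sub[OF assms(1,2)]
    by (simp add: emeasure_eq_measure2)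
  then have "A \<in> null_sets lborel" using assms by auto
  then have "AE x in lborel. x \<notin> A" by (rule AE_not_in)
  then have "AE x in lborel. indicator A x *\<^sub>R h x = 0"
    by (rule eventually_mono) auto
  then show ?thesis unfolding set_lebesgue_integral_def by (rule integral_eq_zero_AE)
qed

definition conc_on :: "(real \<Rightarrow> real) \<Rightarrow> bool" where
  "conc_on h \<longleftrightarrow> (\<forall>x y z. -pi \<le> x \<longrightarrow> x < y \<longrightarrow> y < z \<longrightarrow> z \<le> pi \<longrightarrow>
      (z - y) * h x + (y - x) * h z \<le> (z - x) * h y)"

lemma conc_min:
  assumes "conc_on h" "-pi \<le> x" "x \<le> y" "y \<le> z" "z \<le> pi"
  shows "min (h x) (h z) \<le> h y"
proof (cases "x = y \<or> y = z")
  case True then show ?thesis by auto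
next
  case False
  then have xy: "x < y" "y < z" using assms by auto
  have c: "(z - y) * h x + (y - x) * h z \<le> (z - x) * h y"
    using assms xy unfolding conc_on_def by blast
  have "(z - x) * min (h x) (h z) = (z - y) * min (h x) (h z) + (y - x) * min (h x) (h z)"
    by (simp add: algebra_simps)
  also have "\<dots> \<le> (z - y) * h x + (y - x) * h z"
    using xy by (intro add_mono mult_left_mono) auto
  also have "\<dots> \<le> (z - x) * h y" by (rule c)
  finally show ?thesis using xy by simp
qed

lemma conc_o1:
  assumes "conc_on h" "-pi \<le> x" "x < y" "y < z" "z \<le> pi" "h y \<le> h x"
  shows "h z \<le> h y"
proof -
  have c: "(z - y) * h x + (y - x) * h z \<le> (z - x) * h y"
    using assms unfolding conc_on_def by blast
  have "(z - y) * h y \<le> (z - y) * h x" using assms by (intro mult_left_mono) auto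
  then have "(y - x) * h z \<le> (y - x) * h y" using c by (simp add: algebra_simps)
  then show ?thesis using assms by simp
qed

lemma conc_o2:
  assumes "conc_on h" "-pi \<le> x" "x < y" "y < z" "z \<le> pi" "h y \<le> h z"
  shows "h x \<le> h y"
proof -
  have c: "(z - y) * h x + (y - x) * h z \<le> (z - x) * h y"
    using assms unfolding conc_on_def by blast
  have "(y - x) * h y \<le> (y - x) * h z" using assms by (intro mult_left_mono) auto
  then have "(z - y) * h x \<le> (z - y) * h y" using c by (simp add: algebra_simps)
  then show ?thesis using assms by simp
qed

lemma bathtub_level:
  fixes h :: "real \<Rightarrow> real"
  assumes cont: "continuous_on {-pi..pi} h"
    and A: "A \<in> sets borel" "A \<subseteq> {-pi..pi}"
    and q: "-pi \<le> q" "q + measure lborel A \<le> pi"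
    and s1: "\<And>y. y \<in> {q..q + measure lborel A} \<Longrightarrow> s \<le> h y"
    and s2: "\<And>y. y \<in> {-pi..pi} - {q..q + measure lborel A} \<Longrightarrow> h y \<le> s"
  shows "set_lebesgue_integral lborel A h \<le> set_lebesgue_integral lborel {q..q + measure lborel A} h"
proof -
  define a where "a = measure lborel A"
  define K where "K = {q..q+a}"
  have a0: "0 \<le> a" unfolding a_def by simp
  have Ks: "K \<in> sets borel" "K \<subseteq> {-pi..pi}" using q a0 unfolding K_def a_def by auto
  have mK: "measure lborel K = a" using a0 unfolding K_def by simp
  have iA: "set_integrable lborel S h" if "S \<in> sets borel" "S \<subseteq> {-pi..pi}" for S
    by (rule si_cont[OF cont that])
  have sAK: "A \<inter> K \<in> sets borel" "A - K \<in> sets borel" "K - A \<in> sets borel"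
    using A Ks by auto
  have subs: "A \<inter> K \<subseteq> {-pi..pi}" "A - K \<subseteq> {-pi..pi}" "K - A \<subseteq> {-pi..pi}" using A Ks by auto
  have eA: "set_lebesgue_integral lborel A h = set_lebesgue_integral lborel (A \<inter> K) h + set_lebesgue_integral lborel (A - K) h"
  proof -
    have "A = (A \<inter> K) \<union> (A - K)" by auto
    then have "set_lebesgue_integral lborel A h = set_lebesgue_integral lborel ((A \<inter> K) \<union> (A - K)) h" by simp
    also have "\<dots> = set_lebesgue_integral lborel (A \<inter> K) h + set_lebesgue_integral lborel (A - K) h"
      by (rule set_integral_Un) (use iA sAK subs in auto)
    finally show ?thesis .
  qed
  have eK: "set_lebesgue_integral lborel K h = set_lebesgue_integral lborel (A \<inter> K) h + set_lebesgue_integral lborel (K - A) h"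
  proof -
    have "K = (A \<inter> K) \<union> (K - A)" by auto
    then have "set_lebesgue_integral lborel K h = set_lebesgue_integral lborel ((A \<inter> K) \<union> (K - A)) h" by simp
    also have "\<dots> = set_lebesgue_integral lborel (A \<inter> K) h + set_lebesgue_integral lborel (K - A) h"
      by (rule set_integral_Un) (use iA sAK subs in auto)
    finally show ?thesis .
  qed
  have cst: "set_lebesgue_integral lborel S (\<lambda>_. s) = measure lborel S * s" if "S \<in> sets borel" "S \<subseteq> {-pi..pi}" for S
    using set_integral_const[of S lborel s] fin_sub[OF that] that by simp
  have i1: "set_lebesgue_integral lborel (A - K) h \<le> measure lborel (A - K) * s"
  proof -
    have "set_lebesgue_integral lborel (A - K) h \<le> set_lebesgue_integral lborel (A - K) (\<lambda>_. s)"
      by (rule set_integral_mono[OF iA si_cont[OF continuous_on_const]]) (use sAK subs s2 A in \<open>auto simp: K_def a_def\<close>)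
    then show ?thesis using cst[OF sAK(2) subs(2)] by simp
  qed
  have i2: "measure lborel (K - A) * s \<le> set_lebesgue_integral lborel (K - A) h"
  proof -
    have "set_lebesgue_integral lborel (K - A) (\<lambda>_. s) \<le> set_lebesgue_integral lborel (K - A) h"
      by (rule set_integral_mono[OF si_cont[OF continuous_on_const] iA]) (use sAK subs s1 A in \<open>auto simp: K_def a_def\<close>)
    then show ?thesis using cst[OF sAK(3) subs(3)] by simp
  qed
  have mAK: "measure lborel (A - K) = measure lborel (K - A)"
  proof -
    have e1: "A - K = A - (A \<inter> K)" "K - A = K - (A \<inter> K)" by auto
    have "measure lborel (A - (A \<inter> K)) = measure lborel A - measure lborel (A \<inter> K)"
      by (rule measurable_measure_Diff) (use fin_sub[OF A] sAK in auto)
    moreover have "measure lborel (K - (A \<inter> K)) = measure lborel K - measure lborel (A \<inter> K)"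
      by (rule measurable_measure_Diff) (use fin_sub[OF Ks] sAK in auto)
    ultimately have "measure lborel (A - K) = measure lborel A - measure lborel (A \<inter> K)"
       "measure lborel (K - A) = measure lborel K - measure lborel (A \<inter> K)" unfolding e1[symmetric] by auto
    then show ?thesis using mK a_def by simp
  qed
  show ?thesis using eA eK i1[unfolded mAK] i2 unfolding K_def a_def by linarith
qed

lemma bathtub:
  fixes h :: "real \<Rightarrow> real"
  assumes cont: "continuous_on {-pi..pi} h" and conc: "conc_on h"
    and A: "A \<in> sets borel" "A \<subseteq> {-pi..pi}"
  shows "\<exists>q. -pi \<le> q \<and> q + measure lborel A \<le> pi \<and>
     set_lebesgue_integral lborel A h \<le> set_lebesgue_integral lborel {q..q + measure lborel A} h"
proof -
  define a where "a = measure lborel A"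
  have a0: "0 \<le> a" unfolding a_def by simp
  have a2: "a \<le> 2*pi" unfolding a_def using fin_sub[OF A] by simp
  show ?thesis
  proof (cases "a = 0")
    case True
    have "set_lebesgue_integral lborel A h = 0" using si_null[OF A] True a_def by simp
    moreover have "set_lebesgue_integral lborel {-pi..-pi} h = 0" by (rule si_null) auto
    ultimately show ?thesis using True a_def by (intro exI[of _ "-pi"]) auto
  next
    case False
    then have apos: "0 < a" using a0 by simp
    have lev: "\<exists>q s. -pi \<le> q \<and> q + a \<le> pi \<and> (\<forall>y\<in>{q..q+a}. s \<le> h y) \<and>
                 (\<forall>y\<in>{-pi..pi} - {q..q+a}. h y \<le> s)"
    proof -
      consider "h (-pi+a) \<le> h (-pi)" | "h (pi-a) \<le> h pi" | "h (-pi) < h (-pi+a)" "h pi < h (pi-a)"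
        by linarith
      then show ?thesis
      proof cases
        case 1
        have "\<forall>y\<in>{-pi..-pi+a}. h (-pi+a) \<le> h y"
          using conc_min[OF conc, of "-pi" _ "-pi+a"] 1 a2 by fastforce
        moreover have "\<forall>y\<in>{-pi..pi} - {-pi..-pi+a}. h y \<le> h (-pi+a)"
          using conc_o1[OF conc, of "-pi" "-pi+a"] 1 apos by fastforce
        ultimately show ?thesis using a2 apos by (intro exI[of _ "-pi"] exI[of _ "h (-pi+a)"]) auto
      next
        case 2
        have "\<forall>y\<in>{pi-a..pi-a+a}. h (pi-a) \<le> h y"
          using conc_min[OF conc, of "pi-a" _ "pi"] 2 a2 by fastforce
        moreover have "\<forall>y\<in>{-pi..pi} - {pi-a..pi-a+a}. h y \<le> h (pi-a)"
          using conc_o2[OF conc, of _ "pi-a" "pi"] 2 apos by fastforce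
        ultimately show ?thesis using a2 apos by (intro exI[of _ "pi-a"] exI[of _ "h (pi-a)"]) auto
      next
        case 3
        define phi where "phi q = h (q + a) - h q" for q
        have cphi: "continuous_on {-pi..pi-a} phi"
        proof -
          have "continuous_on {-pi..pi-a} (\<lambda>q. h (q + a))"
            by (rule continuous_on_compose2[OF cont]) (use apos in \<open>auto intro!: continuous_intros\<close>)
          moreover have "continuous_on {-pi..pi-a} h"
            by (rule continuous_on_subset[OF cont]) (use apos in auto)
          ultimately show ?thesis unfolding phi_def by (intro continuous_intros)
        qed
        have "\<exists>x\<ge>-pi. x \<le> pi-a \<and> phi x = 0"
          by (rule IVT2'[OF _ _ _ cphi]) (use 3 a2 in \<open>auto simp: phi_def\<close>)
        then obtain q where q: "-pi \<le> q" "q \<le> pi - a" "h (q+a) = h q"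
          unfolding phi_def by auto
        have "\<forall>y\<in>{q..q+a}. h q \<le> h y"
          using conc_min[OF conc, of q _ "q+a"] q by fastforce
        moreover have "\<forall>y\<in>{-pi..pi} - {q..q+a}. h y \<le> h q"
        proof
          fix y assume y: "y \<in> {-pi..pi} - {q..q+a}"
          show "h y \<le> h q"
          proof (cases "y < q")
            case True
            then show ?thesis using conc_o2[OF conc, of y q "q+a"] q y apos by auto
          next
            case False
            then have "q + a < y" using y by auto
            then show ?thesis using conc_o1[OF conc, of q "q+a" y] q y apos by auto
          qed
        qed
        ultimately show ?thesis using q by (intro exI[of _ q] exI[of _ "h q"]) auto
      qed
    qed
    then obtain q s where q: "-pi \<le> q" "q + a \<le> pi" "\<forall>y\<in>{q..q+a}. s \<le> h y"
      "\<forall>y\<in>{-pi..pi} - {q..q+a}. h y \<le> s" by blast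
    have "set_lebesgue_integral lborel A h \<le> set_lebesgue_integral lborel {q..q + measure lborel A} h"
      by (rule bathtub_level[OF cont A, of q s]) (use q in \<open>auto simp: a_def\<close>)
    then show ?thesis using q a_def by auto
  qed
qed

definition HE :: "real set \<Rightarrow> real \<Rightarrow> real" where
  "HE E y = set_lebesgue_integral lborel E (\<lambda>x. G x y)"

locale bset =
  fixes E :: "real set"
  assumes Eb: "E \<in> sets borel" and Es: "E \<subseteq> {-pi..pi}"
begin

lemma int_G: "set_integrable lborel E (\<lambda>x. G x y)"
  by (rule si_cont[OF continuous_G1 Eb Es])

lemma int_c: "set_integrable lborel E (\<lambda>x. c::real)"
  by (rule si_cont[OF continuous_on_const Eb Es])

lemma int_const: "set_lebesgue_integral lborel E (\<lambda>_. c::real) = measure lborel E * c"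
  using set_integral_const[of E lborel c] fin_sub[OF Eb Es] Eb by simp

lemma HE_nonneg: "y \<in> {-pi..pi} \<Longrightarrow> 0 \<le> HE E y"
proof -
  assume y: "y \<in> {-pi..pi}"
  have "set_lebesgue_integral lborel E (\<lambda>_. 0) \<le> HE E y"
    unfolding HE_def by (rule set_integral_mono[OF int_c int_G]) (use Es y G_nonneg in auto)
  then show ?thesis by (simp add: int_const)
qed

lemma HE_le: "y \<in> {-pi..pi} \<Longrightarrow> HE E y \<le> measure lborel E * (pi/2)"
proof -
  assume y: "y \<in> {-pi..pi}"
  have "HE E y \<le> set_lebesgue_integral lborel E (\<lambda>_. pi/2)"
    unfolding HE_def by (rule set_integral_mono[OF int_G int_c]) (use Es y G_le in auto)
  then show ?thesis by (simp add: int_const)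
qed

lemma HE_lip: "\<bar>HE E y - HE E y'\<bar> \<le> measure lborel E * \<bar>y - y'\<bar>"
proof -
  have d: "HE E y - HE E y' = set_lebesgue_integral lborel E (\<lambda>x. G x y - G x y')"
    unfolding HE_def by (rule set_integral_diff(2)[OF int_G int_G, symmetric])
  have id: "set_integrable lborel E (\<lambda>x. G x y - G x y')"
    by (rule set_integral_diff(1)[OF int_G int_G])
  have "set_lebesgue_integral lborel E (\<lambda>x. G x y - G x y') \<le> set_lebesgue_integral lborel E (\<lambda>_. \<bar>y - y'\<bar>)"
    by (rule set_integral_mono[OF id int_c]) (use Es G_lip in \<open>auto simp: abs_le_iff\<close>)
  moreover have "set_lebesgue_integral lborel E (\<lambda>_. - \<bar>y - y'\<bar>) \<le> set_lebesgue_integral lborel E (\<lambda>x. G x y - G x y')"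
  proof (rule set_integral_mono[OF int_c id])
    fix x assume "x \<in> E"
    then have "x \<in> {-pi..pi}" using Es by auto
    then have "\<bar>x\<bar> \<le> pi" by (auto simp: abs_le_iff)
    then show "- \<bar>y - y'\<bar> \<le> G x y - G x y'" using G_lip[of x y y'] by (auto simp: abs_le_iff)
  qed
  ultimately show ?thesis unfolding d int_const by (auto simp: abs_le_iff)
qed

lemma HE_cont: "continuous_on S (HE E)"
proof -
  have "(measure lborel E)-lipschitz_on S (HE E)"
    unfolding lipschitz_on_def dist_real_def using HE_lip by auto
  then show ?thesis by (rule lipschitz_on_continuous_on)
qed

lemma HE_conc: "conc_on (HE E)"
  unfolding conc_on_def
proof (intro allI impI)
  fix x y z :: real assume xyz: "-pi \<le> x" "x < y" "y < z" "z \<le> pi"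
  have "(z - y) * HE E x + (y - x) * HE E z
     = set_lebesgue_integral lborel E (\<lambda>w. (z - y) * G w x + (y - x) * G w z)"
    unfolding HE_def
    by (subst set_integral_add(2)) (auto simp: set_integral_mult_right intro!: set_integrable_mult_right int_G)
  also have "\<dots> \<le> set_lebesgue_integral lborel E (\<lambda>w. (z - x) * G w y)"
    by (rule set_integral_mono)
       (auto intro!: set_integral_add set_integrable_mult_right int_G G_conc xyz)
  also have "\<dots> = (z - x) * HE E y" unfolding HE_def by (simp add: set_integral_mult_right)
  finally show "(z - y) * HE E x + (y - x) * HE E z \<le> (z - x) * HE E y" .
qed

end

lemma G_meas_lb[measurable]: "(\<lambda>p. G (fst p) (snd p)) \<in> borel_measurable (lborel \<Otimes>\<^sub>M lborel)"
  using G_measurable_pair[of lborel lborel] by (simp add: case_prod_beta')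

lemma HE_sym:
  assumes A: "A \<in> sets borel" "A \<subseteq> {-pi..pi}" and E: "E \<in> sets borel" "E \<subseteq> {-pi..pi}"
  shows "set_lebesgue_integral lborel A (HE E) = set_lebesgue_integral lborel E (HE A)"
proof -
  define f where "f x y = indicator E x * indicator A y * G x y" for x y
  have [measurable]: "A \<in> sets borel" "E \<in> sets borel" using A E by auto
  have fm: "(\<lambda>(x,y). f x y) \<in> borel_measurable (lborel \<Otimes>\<^sub>M lborel)"
    unfolding f_def case_prod_beta' by measurable
  have sq: "{-pi..pi} \<times> {-pi..pi} \<in> sets (lborel \<Otimes>\<^sub>M lborel)" by auto
  have isq: "integrable (lborel \<Otimes>\<^sub>M lborel) (\<lambda>p. pi/2 * indicator ({-pi..pi} \<times> {-pi..pi}) p)"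
  proof -
    have "emeasure (lborel \<Otimes>\<^sub>M lborel) ({-pi..pi} \<times> {-pi..pi}) = ennreal (2*pi) * ennreal (2*pi)"
      by (subst lborel.emeasure_pair_measure_Times) auto
    then have "emeasure (lborel \<Otimes>\<^sub>M lborel) ({-pi..pi} \<times> {-pi..pi}) < \<infinity>"
      by (simp add: ennreal_mult_less_top)
    then show ?thesis by (intro integrable_mult_right integrable_real_indicator sq)
  qed
  have fi: "integrable (lborel \<Otimes>\<^sub>M lborel) (\<lambda>(x,y). f x y)"
  proof (rule Bochner_Integration.integrable_bound[OF isq fm])
    show "AE p in lborel \<Otimes>\<^sub>M lborel. norm ((\<lambda>(x,y). f x y) p) \<le> norm (pi/2 * indicator ({-pi..pi} \<times> {-pi..pi}) p)"
    proof (rule AE_I2, clarify)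
      fix x y :: real
      show "norm (f x y) \<le> norm (pi/2 * indicator ({-pi..pi} \<times> {-pi..pi}) (x,y))"
        using A E G_nonneg[of x y] G_le[of x y] by (auto simp: f_def indicator_def)
    qed
  qed
  have "(LBINT y. LBINT x. f x y) = (LBINT x. LBINT y. f x y)"
    by (rule lborel_pair.Fubini_integral[OF fi])
  moreover have "set_lebesgue_integral lborel A (HE E) = (LBINT y. LBINT x. f x y)"
    unfolding set_lebesgue_integral_def HE_def f_def
    by (intro Bochner_Integration.integral_cong refl) (simp flip: integral_mult_right_zero add: mult_ac)
  moreover have "set_lebesgue_integral lborel E (HE A) = (LBINT x. LBINT y. f x y)"
  proof -
    have hA: "HE A x = (LBINT y. indicator A y * G x y)" for x
      unfolding HE_def set_lebesgue_integral_def
      by (rule Bochner_Integration.integral_cong) (auto simp: G_sym[of _ x])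
    show ?thesis
      unfolding set_lebesgue_integral_def hA f_def
      by (intro Bochner_Integration.integral_cong refl) (simp flip: integral_mult_right_zero add: mult_ac)
  qed
  ultimately show ?thesis by simp
qed

lemma HE_interval: "a \<le> b \<Longrightarrow> HE {a..b} y = F1 a b y"
  unfolding HE_def by (rule int_G_interval)

lemma int_HE_intervals:
  assumes "j1 \<le> j2" "k1 \<le> k2"
  shows "set_lebesgue_integral lborel {j1..j2} (HE {k1..k2}) = Psi j1 j2 k1 k2"
proof -
  have "HE {k1..k2} = F1 k1 k2" using HE_interval[OF assms(2)] by auto
  then show ?thesis using int_F1_interval[OF assms(1)] by simp
qed

lemma KEY:
  assumes A: "A \<in> sets borel" "A \<subseteq> {-pi..pi}" and E: "E \<in> sets borel" "E \<subseteq> {-pi..pi}"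
  shows "set_lebesgue_integral lborel A (HE E)
     \<le> set_lebesgue_integral lborel {-measure lborel A/2..measure lborel A/2} (HE {-measure lborel E/2..measure lborel E/2})"
proof -
  define a t where "a = measure lborel A" "t = measure lborel E"
  interpret bE: bset E using E by unfold_locales
  obtain q where q: "-pi \<le> q" "q + a \<le> pi"
    "set_lebesgue_integral lborel A (HE E) \<le> set_lebesgue_integral lborel {q..q + a} (HE E)"
    using bathtub[OF bE.HE_cont bE.HE_conc A] unfolding a_t_def by blast
  have a0: "0 \<le> a" "0 \<le> t" unfolding a_t_def by auto
  have Kb: "{q..q+a} \<in> sets borel" "{q..q+a} \<subseteq> {-pi..pi}" using q a0 by auto
  interpret bK: bset "{q..q+a}" using Kb by unfold_locales
  have s1: "set_lebesgue_integral lborel {q..q + a} (HE E) = set_lebesgue_integral lborel E (HE {q..q+a})"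
    by (rule HE_sym[OF Kb E])
  obtain p where p: "-pi \<le> p" "p + t \<le> pi"
    "set_lebesgue_integral lborel E (HE {q..q+a}) \<le> set_lebesgue_integral lborel {p..p + t} (HE {q..q+a})"
    using bathtub[OF bK.HE_cont bK.HE_conc E] unfolding a_t_def by blast
  have "set_lebesgue_integral lborel {p..p + t} (HE {q..q+a}) = Psi p (p+t) q (q+a)"
    by (rule int_HE_intervals) (use a0 in auto)
  also have "\<dots> \<le> Psi (-((p+t)-p)/2) (((p+t)-p)/2) (-((q+a)-q)/2) (((q+a)-q)/2)"
    by (rule Psi_le) (use p q a0 in auto)
  also have "\<dots> = Psi (-t/2) (t/2) (-a/2) (a/2)" by simp
  also have "\<dots> = set_lebesgue_integral lborel {-t/2..t/2} (HE {-a/2..a/2})"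
    by (rule int_HE_intervals[symmetric]) (use a0 in auto)
  also have "\<dots> = set_lebesgue_integral lborel {-a/2..a/2} (HE {-t/2..t/2})"
  proof (rule HE_sym)
    have "a \<le> 2*pi" "t \<le> 2*pi" unfolding a_t_def using fin_sub[OF A] fin_sub[OF E] by auto
    then show "{-t/2..t/2} \<subseteq> {-pi..pi}" "{-a/2..a/2} \<subseteq> {-pi..pi}" by auto
  qed auto
  finally show ?thesis using q(3) s1 p(3) unfolding a_t_def by linarith
qed

lemma conc_G1: "conc_on (\<lambda>x. G x y)"
  unfolding conc_on_def using G_conc[of _ _ _ y] by (simp add: G_sym[of _ y])

lemma SING:
  assumes E: "E \<in> sets borel" "E \<subseteq> {-pi..pi}" and y: "y \<in> {-pi..pi}"
  shows "HE E y \<le> HE {-measure lborel E/2..measure lborel E/2} 0"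
proof -
  define t where "t = measure lborel E"
  have t0: "0 \<le> t" unfolding t_def by auto
  obtain p where p: "-pi \<le> p" "p + t \<le> pi"
    "set_lebesgue_integral lborel E (\<lambda>x. G x y) \<le> set_lebesgue_integral lborel {p..p + t} (\<lambda>x. G x y)"
    using bathtub[OF continuous_G1 conc_G1 E] unfolding t_def by blast
  have "set_lebesgue_integral lborel {p..p + t} (\<lambda>x. G x y) = F1 p (p+t) y"
    by (rule int_G_interval) (use t0 in auto)
  also have "\<dots> \<le> pi*((p+t)-p)/2 - ((p+t)-p)^2/8"
    by (rule F1_le) (use p t0 y in auto)
  also have "\<dots> = F1 (-t/2) (t/2) 0"
    unfolding F1_def using t0 by (simp add: field_simps power2_eq_square)
  also have "\<dots> = HE {-t/2..t/2} 0" using t0 by (simp add: HE_interval)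
  finally show ?thesis using p(3) unfolding HE_def t_def by linarith
qed

lemma nn_integral_sum3:
  fixes M N1 N2 N3 :: "real measure" and g :: "real \<Rightarrow> ennreal"
  assumes s: "sets M = sets borel" "sets N1 = sets borel" "sets N2 = sets borel" "sets N3 = sets borel"
    and e: "\<And>A. A \<in> sets borel \<Longrightarrow> emeasure M A = emeasure N1 A + emeasure N2 A + emeasure N3 A"
    and g: "g \<in> borel_measurable borel"
  shows "integral\<^sup>N M g = integral\<^sup>N N1 g + integral\<^sup>N N2 g + integral\<^sup>N N3 g"
  using g
proof (induction rule: borel_measurable_induct)
  case (cong f g)
  then have "f = g" by auto
  then show ?case using cong by simp
next
  case (set A)
  have A: "A \<in> sets M" "A \<in> sets N1" "A \<in> sets N2" "A \<in> sets N3" using set.hyps unfolding s by simp_all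
  show ?case unfolding nn_integral_indicator[OF A(1)] nn_integral_indicator[OF A(2)]
    nn_integral_indicator[OF A(3)] nn_integral_indicator[OF A(4)] using e[OF set] .
next
  case (mult u c)
  have m: "u \<in> borel_measurable M" "u \<in> borel_measurable N1" "u \<in> borel_measurable N2" "u \<in> borel_measurable N3"
    using mult.hyps by (simp_all only: measurable_cong_sets[OF s(1) refl] measurable_cong_sets[OF s(2) refl]
        measurable_cong_sets[OF s(3) refl] measurable_cong_sets[OF s(4) refl])
  show ?case using mult.IH by (simp add: nn_integral_cmult m distrib_left)
next
  case (add u v)
  have m: "u \<in> borel_measurable M" "u \<in> borel_measurable N1" "u \<in> borel_measurable N2" "u \<in> borel_measurable N3"
          "v \<in> borel_measurable M" "v \<in> borel_measurable N1" "v \<in> borel_measurable N2" "v \<in> borel_measurable N3"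
    using add.hyps by (simp_all only: measurable_cong_sets[OF s(1) refl] measurable_cong_sets[OF s(2) refl]
        measurable_cong_sets[OF s(3) refl] measurable_cong_sets[OF s(4) refl])
  show ?case using add.IH by (simp add: nn_integral_add m add_ac)
next
  case (seq U)
  have m: "\<And>i. U i \<in> borel_measurable M" "\<And>i. U i \<in> borel_measurable N1"
     "\<And>i. U i \<in> borel_measurable N2" "\<And>i. U i \<in> borel_measurable N3"
    using seq.hyps by (simp_all only: measurable_cong_sets[OF s(1) refl] measurable_cong_sets[OF s(2) refl]
        measurable_cong_sets[OF s(3) refl] measurable_cong_sets[OF s(4) refl])
  have sup: "(SUP i. U i) = (\<lambda>x. SUP i. U i x)" by (rule ext) (simp only: SUP_apply)
  have inc: "incseq (\<lambda>i. integral\<^sup>N K (U i))" for K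
    using \<open>incseq U\<close> unfolding incseq_def by (auto intro!: nn_integral_mono simp: le_fun_def)
  have "integral\<^sup>N M (SUP i. U i) = (SUP i. integral\<^sup>N M (U i))"
    unfolding sup by (rule nn_integral_monotone_convergence_SUP[OF \<open>incseq U\<close> m(1)])
  also have "\<dots> = (SUP i. integral\<^sup>N N1 (U i) + integral\<^sup>N N2 (U i) + integral\<^sup>N N3 (U i))"
    using seq.IH by simp
  also have "\<dots> = (SUP i. integral\<^sup>N N1 (U i) + integral\<^sup>N N2 (U i)) + (SUP i. integral\<^sup>N N3 (U i))"
    by (rule ennreal_SUP_add) (use inc in \<open>auto intro: add_mono simp: incseq_def\<close>)
  also have "(SUP i. integral\<^sup>N N1 (U i) + integral\<^sup>N N2 (U i)) = (SUP i. integral\<^sup>N N1 (U i)) + (SUP i. integral\<^sup>N N2 (U i))"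
    by (rule ennreal_SUP_add[OF inc inc])
  also have "(SUP i. integral\<^sup>N N1 (U i)) = integral\<^sup>N N1 (SUP i. U i)"
    unfolding sup by (rule nn_integral_monotone_convergence_SUP[OF \<open>incseq U\<close> m(2), symmetric])
  also have "(SUP i. integral\<^sup>N N2 (U i)) = integral\<^sup>N N2 (SUP i. U i)"
    unfolding sup by (rule nn_integral_monotone_convergence_SUP[OF \<open>incseq U\<close> m(3), symmetric])
  also have "(SUP i. integral\<^sup>N N3 (U i)) = integral\<^sup>N N3 (SUP i. U i)"
    unfolding sup by (rule nn_integral_monotone_convergence_SUP[OF \<open>incseq U\<close> m(4), symmetric])
  finally show ?case .
qed

lemma pot_int:
  fixes \<nu> :: "real measure"
  assumes sn: "sets \<nu> = sets borel" and fin: "finite_measure \<nu>"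
    and conc: "emeasure \<nu> (UNIV - {-pi..pi}) = 0"
    and E: "E \<in> sets borel" "E \<subseteq> {-pi..pi}"
  shows "(LINT x:E|lborel. u_pot \<nu> x) = enn2real (\<integral>\<^sup>+ y. ennreal (HE E y) \<partial>\<nu>)"
    "(\<integral>\<^sup>+ y. ennreal (HE E y) \<partial>\<nu>) \<le> ennreal (pi^2 * measure \<nu> UNIV)"
proof -
  interpret finite_measure \<nu> by (rule fin)
  interpret bE: bset E using E by unfold_locales
  have sp: "space \<nu> = UNIV" using sets_eq_imp_space_eq[OF sn] by simp
  have AEI: "AE y in \<nu>. y \<in> {-pi..pi}"
    by (rule AE_I'[of "UNIV - {-pi..pi}"]) (use conc sn in \<open>auto simp: sp\<close>)
  have Gm: "(\<lambda>y. G x y) \<in> borel_measurable \<nu>" for x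
    unfolding measurable_cong_sets[OF sn refl] by (rule borel_measurable_continuous_onI[OF continuous_G2])
  have Gp[measurable]: "(\<lambda>(x,y). G x y) \<in> borel_measurable (lborel \<Otimes>\<^sub>M \<nu>)"
    by (rule G_measurable_pair) (use sn in auto)
  have [measurable]: "E \<in> sets lborel" using E by simp
  have emU: "emeasure \<nu> (space \<nu>) = ennreal (measure \<nu> UNIV)"
    by (simp add: emeasure_eq_measure sp)
  have uI: "u_pot \<nu> x = enn2real (\<integral>\<^sup>+ y. ennreal (G x y) \<partial>\<nu>)" if x: "x \<in> {-pi..pi}" for x
    unfolding u_pot_def
    by (rule integral_eq_nn_integral[OF Gm]) (use AEI in \<open>eventually_elim, use x G_nonneg in auto\<close>)
  have uF: "(\<integral>\<^sup>+ y. ennreal (G x y) \<partial>\<nu>) < top" if x: "x \<in> {-pi..pi}" for x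
  proof -
    have "(\<integral>\<^sup>+ y. ennreal (G x y) \<partial>\<nu>) \<le> (\<integral>\<^sup>+ y. ennreal (pi/2) \<partial>\<nu>)"
      by (rule nn_integral_mono_AE) (use AEI in \<open>eventually_elim, use x G_le in \<open>auto intro: ennreal_leI\<close>\<close>)
    also have "\<dots> = ennreal (pi/2) * emeasure \<nu> (space \<nu>)" by simp
    also have "\<dots> < top" unfolding emU by (simp add: ennreal_mult_less_top)
    finally show ?thesis .
  qed
  have ueq: "ennreal (u_pot \<nu> x) = (\<integral>\<^sup>+ y. ennreal (G x y) \<partial>\<nu>)" if x: "x \<in> {-pi..pi}" for x
    using uI[OF x] uF[OF x] by (simp add: ennreal_enn2real)
  have um: "u_pot \<nu> \<in> borel_measurable lborel"
    unfolding u_pot_def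
    by (rule sigma_finite_measure.borel_measurable_lebesgue_integral[OF sigma_finite_measure_axioms Gp])
  have unn: "0 \<le> u_pot \<nu> x" if "x \<in> {-pi..pi}" for x using uI[OF that] by simp
  have L1: "(LINT x:E|lborel. u_pot \<nu> x) = enn2real (\<integral>\<^sup>+ x. ennreal (indicator E x *\<^sub>R u_pot \<nu> x) \<partial>lborel)"
    unfolding set_lebesgue_integral_def
  proof (rule integral_eq_nn_integral)
    show "(\<lambda>x. indicator E x *\<^sub>R u_pot \<nu> x) \<in> borel_measurable lborel" using um by measurable
    show "AE x in lborel. 0 \<le> indicator E x *\<^sub>R u_pot \<nu> x"
      by (rule AE_I2) (use E unn in \<open>auto simp: indicator_def\<close>)
  qed
  have L2: "(\<integral>\<^sup>+ x. ennreal (indicator E x *\<^sub>R u_pot \<nu> x) \<partial>lborel)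
      = (\<integral>\<^sup>+ x. (\<integral>\<^sup>+ y. ennreal (indicator E x * G x y) \<partial>\<nu>) \<partial>lborel)"
  proof (rule nn_integral_cong)
    fix x :: real
    show "ennreal (indicator E x *\<^sub>R u_pot \<nu> x) = (\<integral>\<^sup>+ y. ennreal (indicator E x * G x y) \<partial>\<nu>)"
    proof (cases "x \<in> E")
      case True
      then show ?thesis using ueq[of x] E by auto
    next
      case False
      then show ?thesis by simp
    qed
  qed
  have psf: "pair_sigma_finite lborel \<nu>"
    by (intro pair_sigma_finite.intro lborel.sigma_finite_measure_axioms sigma_finite_measure_axioms)
  have L3: "(\<integral>\<^sup>+ x. (\<integral>\<^sup>+ y. ennreal (indicator E x * G x y) \<partial>\<nu>) \<partial>lborel)
      = (\<integral>\<^sup>+ y. (\<integral>\<^sup>+ x. ennreal (indicator E x * G x y) \<partial>lborel) \<partial>\<nu>)"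
    by (rule pair_sigma_finite.Fubini'[OF psf, symmetric]) measurable
  have L4: "(\<integral>\<^sup>+ y. (\<integral>\<^sup>+ x. ennreal (indicator E x * G x y) \<partial>lborel) \<partial>\<nu>)
      = (\<integral>\<^sup>+ y. ennreal (HE E y) \<partial>\<nu>)"
  proof (rule nn_integral_cong_AE)
    show "AE y in \<nu>. (\<integral>\<^sup>+ x. ennreal (indicator E x * G x y) \<partial>lborel) = ennreal (HE E y)"
      using AEI
    proof eventually_elim
      case (elim y)
      have "(\<integral>\<^sup>+ x. ennreal (indicator E x * G x y) \<partial>lborel) = ennreal (LINT x|lborel. indicator E x * G x y)"
      proof (rule nn_integral_eq_integral)
        show "integrable lborel (\<lambda>x. indicator E x * G x y)"
          using bE.int_G[of y] unfolding set_integrable_def by simp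
        show "AE x in lborel. 0 \<le> indicator E x * G x y"
          by (rule AE_I2) (use E elim G_nonneg in \<open>auto simp: indicator_def\<close>)
      qed
      then show ?case unfolding HE_def set_lebesgue_integral_def by simp
    qed
  qed
  show "(LINT x:E|lborel. u_pot \<nu> x) = enn2real (\<integral>\<^sup>+ y. ennreal (HE E y) \<partial>\<nu>)"
    using L1 L2 L3 L4 by simp
  have "(\<integral>\<^sup>+ y. ennreal (HE E y) \<partial>\<nu>) \<le> (\<integral>\<^sup>+ y. ennreal (pi^2) \<partial>\<nu>)"
  proof (rule nn_integral_mono_AE)
    show "AE y in \<nu>. ennreal (HE E y) \<le> ennreal (pi^2)"
      using AEI
    proof eventually_elim
      case (elim y)
      have "HE E y \<le> measure lborel E * (pi/2)" by (rule bE.HE_le[OF elim])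
      also have "\<dots> \<le> (2*pi) * (pi/2)" using fin_sub[OF E] by (intro mult_right_mono) auto
      also have "\<dots> = pi^2" by (simp add: power2_eq_square)
      finally show ?case by (rule ennreal_leI)
    qed
  qed
  also have "\<dots> = ennreal (pi^2 * measure \<nu> UNIV)"
    using emU by (simp add: ennreal_mult)
  finally show "(\<integral>\<^sup>+ y. ennreal (HE E y) \<partial>\<nu>) \<le> ennreal (pi^2 * measure \<nu> UNIV)" .
qed

definition mfun :: "(real \<Rightarrow> real) \<Rightarrow> real \<Rightarrow> real" where
  "mfun f s = measure lborel {x \<in> {-pi..pi}. f x > s}"

definition psi :: "(real \<Rightarrow> real) \<Rightarrow> real \<Rightarrow> real" where
  "psi f \<tau> = Inf {s. measure lborel {x \<in> {-pi..pi}. f x > s} \<le> \<tau>}"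

locale fsetup =
  fixes f :: "real \<Rightarrow> real"
  assumes f_meas[measurable]: "f \<in> borel_measurable borel"
    and f_nonneg: "\<And>x. f x \<ge> 0"
    and f_int: "set_integrable lborel {-pi..pi} f"
begin

lemma lev_sets: "{x \<in> {-pi..pi}. f x > s} \<in> sets borel" "{x \<in> {-pi..pi}. f x > s} \<subseteq> {-pi..pi}"
  by auto

lemma m_le: "mfun f s \<le> 2*pi" "0 \<le> mfun f s"
  unfolding mfun_def using fin_sub[OF lev_sets] by auto

lemma m_mono: "s \<le> s' \<Longrightarrow> mfun f s' \<le> mfun f s"
  unfolding mfun_def
  by (rule measure_mono_fmeasurable) (use fin_sub[OF lev_sets] in auto)

lemma m_neg: "s < 0 \<Longrightarrow> mfun f s = 2*pi"
proof -
  assume "s < 0"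
  then have "{x \<in> {-pi..pi}. f x > s} = {-pi..pi}" using f_nonneg by (auto intro: less_le_trans)
  then show ?thesis unfolding mfun_def by simp
qed

lemma m_markov: "0 < s \<Longrightarrow> mfun f s \<le> set_lebesgue_integral lborel {-pi..pi} f / s"
proof -
  assume s: "0 < s"
  have sb: "{x \<in> {-pi..pi}. s \<le> f x} \<in> sets borel" by measurable
  have "mfun f s \<le> measure lborel {x \<in> {-pi..pi}. s \<le> f x}"
    unfolding mfun_def
  proof (rule measure_mono_fmeasurable)
    have ss: "{x \<in> {-pi..pi}. s \<le> f x} \<subseteq> {-pi..pi}" by auto
    show "{x \<in> {-pi..pi}. s \<le> f x} \<in> fmeasurable lborel" using fin_sub(4)[OF sb ss] .
  qed auto
  also have "\<dots> \<le> set_lebesgue_integral lborel {-pi..pi} f / s"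
    by (rule integral_Markov_inequality'_measure[OF f_int]) (use s f_nonneg in auto)
  finally show ?thesis .
qed

lemma int_nonneg: "0 \<le> set_lebesgue_integral lborel {-pi..pi} f"
  unfolding set_lebesgue_integral_def by (rule integral_nonneg_AE) (auto simp: f_nonneg)

lemma psi_set_ne: "0 < \<tau> \<Longrightarrow> {s. mfun f s \<le> \<tau>} \<noteq> {}"
proof -
  assume t: "0 < \<tau>"
  define I where "I = set_lebesgue_integral lborel {-pi..pi} f"
  define s where "s = I / \<tau> + 1"
  have I0: "0 \<le> I" unfolding I_def by (rule int_nonneg)
  have s0: "0 < s" unfolding s_def using I0 t by (simp add: add_nonneg_pos)
  have "mfun f s \<le> I / s" using m_markov[OF s0] unfolding I_def .
  also have "I / s \<le> \<tau>"
  proof -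
    have "I \<le> \<tau> * s" unfolding s_def using t by (simp add: field_simps)
    then show ?thesis using s0 by (simp add: divide_le_eq)
  qed
  finally show ?thesis by auto
qed

lemma psi_set_bdd: "\<tau> < 2*pi \<Longrightarrow> bdd_below {s. mfun f s \<le> \<tau>}"
proof -
  assume t: "\<tau> < 2*pi"
  have "0 \<le> s" if "mfun f s \<le> \<tau>" for s
  proof (rule ccontr)
    assume "\<not> 0 \<le> s"
    then have "mfun f s = 2*pi" by (intro m_neg) auto
    then show False using that t by simp
  qed
  then show ?thesis unfolding bdd_below_def by (intro exI[of _ 0]) auto
qed

lemma psi_eq: "psi f \<tau> = Inf {s. mfun f s \<le> \<tau>}"
  unfolding psi_def mfun_def ..

lemma psi_lower: "0 < \<tau> \<Longrightarrow> \<tau> < mfun f s \<Longrightarrow> s \<le> psi f \<tau>"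
  unfolding psi_eq
proof (rule cInf_greatest)
  assume t: "0 < \<tau>" "\<tau> < mfun f s"
  show "{s. mfun f s \<le> \<tau>} \<noteq> {}" by (rule psi_set_ne[OF t(1)])
  fix s' assume "s' \<in> {s. mfun f s \<le> \<tau>}"
  then have "mfun f s' \<le> \<tau>" by simp
  show "s \<le> s'"
  proof (rule ccontr)
    assume "\<not> s \<le> s'"
    then have "mfun f s \<le> mfun f s'" by (intro m_mono) auto
    then show False using \<open>mfun f s' \<le> \<tau>\<close> t by simp
  qed
qed

lemma psi_upper: "\<tau> < 2*pi \<Longrightarrow> mfun f s \<le> \<tau> \<Longrightarrow> psi f \<tau> \<le> s"
  unfolding psi_eq by (rule cInf_lower) (auto intro: psi_set_bdd)

lemma psi_nonneg: "0 < \<tau> \<Longrightarrow> \<tau> < 2*pi \<Longrightarrow> 0 \<le> psi f \<tau>"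
  unfolding psi_eq
proof (rule cInf_greatest)
  assume t: "0 < \<tau>" "\<tau> < 2*pi"
  show "{s. mfun f s \<le> \<tau>} \<noteq> {}" by (rule psi_set_ne[OF t(1)])
  fix s assume s: "s \<in> {s. mfun f s \<le> \<tau>}"
  show "0 \<le> s"
  proof (rule ccontr)
    assume "\<not> 0 \<le> s"
    then have "mfun f s = 2*pi" by (intro m_neg) auto
    then show False using s t by simp
  qed
qed

lemma psi_antimono: "0 < \<tau>1 \<Longrightarrow> \<tau>1 \<le> \<tau>2 \<Longrightarrow> \<tau>2 < 2*pi \<Longrightarrow> psi f \<tau>2 \<le> psi f \<tau>1"
  unfolding psi_eq
proof (rule cInf_superset_mono)
  assume t: "0 < \<tau>1" "\<tau>1 \<le> \<tau>2" "\<tau>2 < 2*pi"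
  show "{s. mfun f s \<le> \<tau>1} \<noteq> {}" by (rule psi_set_ne[OF t(1)])
  show "bdd_below {s. mfun f s \<le> \<tau>2}" by (rule psi_set_bdd[OF t(3)])
  show "{s. mfun f s \<le> \<tau>1} \<subseteq> {s. mfun f s \<le> \<tau>2}" using t by auto
qed

lemma decr_eq: "0 < \<tau> \<Longrightarrow> \<tau> < 2*pi \<Longrightarrow> decr_rearr f \<tau> = psi f \<tau>"
  unfolding decr_rearr_def psi_def by auto

definition gfun :: "real \<Rightarrow> real" where
  "gfun y = indicator {-pi<..<pi} y * sym_rearr f y"

lemma gfun_alt: "gfun y = indicator ({-pi<..<pi} - {0}) y * psi f (2*\<bar>y\<bar>) + indicator {0} y * decr_rearr f 0"
proof (cases "y \<in> {-pi<..<pi} - {0}")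
  case True
  then have "0 < 2*\<bar>y\<bar>" "2*\<bar>y\<bar> < 2*pi" by auto
  then show ?thesis using True unfolding gfun_def sym_rearr_def by (simp add: decr_eq)
next
  case False
  then show ?thesis unfolding gfun_def sym_rearr_def by (auto simp: indicator_def)
qed

lemma psi_meas: "psi f \<in> borel_measurable (restrict_space borel {0<..<2*pi})"
proof -
  have "mono_on {0<..<2*pi} (\<lambda>\<tau>. - psi f \<tau>)"
    by (rule mono_onI) (auto intro: psi_antimono)
  then have "(\<lambda>\<tau>. - psi f \<tau>) \<in> borel_measurable (restrict_space borel {0<..<2*pi})"
    by (rule borel_measurable_mono_on_fnc)
  then have "(\<lambda>\<tau>. - (- psi f \<tau>)) \<in> borel_measurable (restrict_space borel {0<..<2*pi})"
    by measurable
  then show ?thesis by simp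
qed

lemma gfun_meas[measurable]: "gfun \<in> borel_measurable borel"
proof -
  have a: "(\<lambda>y. 2*\<bar>y\<bar>) \<in> restrict_space borel ({-pi<..<pi} - {0}) \<rightarrow>\<^sub>M restrict_space borel {0<..<2*pi}"
    by (rule measurable_restrict_space3) auto
  have "(\<lambda>y. psi f (2*\<bar>y\<bar>)) \<in> borel_measurable (restrict_space borel ({-pi<..<pi} - {0}))"
    using measurable_comp[OF a psi_meas] by (simp add: comp_def)
  then have "(\<lambda>y. indicator ({-pi<..<pi} - {0}) y *\<^sub>R psi f (2*\<bar>y\<bar>)) \<in> borel_measurable borel"
    by (subst borel_measurable_restrict_space_iff[symmetric]) auto
  then have h1[measurable]: "(\<lambda>y. indicator ({-pi<..<pi} - {0}) y * psi f (2*\<bar>y\<bar>)) \<in> borel_measurable borel"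
    by simp
  have "(\<lambda>y. indicator ({-pi<..<pi} - {0}) y * psi f (2*\<bar>y\<bar>) + indicator {0} y * decr_rearr f 0) \<in> borel_measurable borel"
    by measurable
  then show ?thesis unfolding gfun_alt[abs_def] .
qed

lemma gfun_lower: "s > 0 \<Longrightarrow> y \<in> {-pi<..<pi} - {0} \<Longrightarrow> 2*\<bar>y\<bar> < mfun f s \<Longrightarrow> s \<le> gfun y"
  unfolding gfun_alt by (auto intro: psi_lower)

lemma gfun_upper: "y \<in> {-pi<..<pi} - {0} \<Longrightarrow> mfun f s \<le> 2*\<bar>y\<bar> \<Longrightarrow> gfun y \<le> s"
  unfolding gfun_alt by (auto intro: psi_upper)

lemma gfun_out: "y \<notin> {-pi<..<pi} \<Longrightarrow> gfun y = 0"
  unfolding gfun_def by simp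

end

lemma ennreal_as_int_lt: "ennreal (r::real) = (\<integral>\<^sup>+ s. indicator {0<..<r} s \<partial>lborel)"
proof (cases "0 \<le> r")
  case True then show ?thesis by (simp add: emeasure_lborel_Ioo)
next
  case False then show ?thesis by (simp add: ennreal_neg)
qed

lemma ennreal_as_int_le: "ennreal (r::real) = (\<integral>\<^sup>+ s. indicator {0<..r} s \<partial>lborel)"
proof (cases "0 \<le> r")
  case True then show ?thesis by (simp add: emeasure_lborel_Ioc)
next
  case False then show ?thesis by (simp add: ennreal_neg)
qed

lemma LC_lt:
  fixes phi :: "real \<Rightarrow> real" and w :: "real \<Rightarrow> ennreal"
  assumes [measurable]: "phi \<in> borel_measurable borel" "w \<in> borel_measurable borel"
  shows "(\<integral>\<^sup>+ y. ennreal (phi y) * w y \<partial>lborel)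
     = (\<integral>\<^sup>+ s. indicator {0<..} s * (\<integral>\<^sup>+ y. indicator {y. s < phi y} y * w y \<partial>lborel) \<partial>lborel)"
proof -
  define h where "h y s = (if 0 < s \<and> s < phi y then w y else 0)" for y s :: real
  have [measurable]: "phi \<in> borel_measurable lborel" "w \<in> borel_measurable lborel" by simp_all
  have hm: "(\<lambda>(y,s). h y s) \<in> borel_measurable (lborel \<Otimes>\<^sub>M lborel)"
    unfolding h_def by measurable
  have "(\<integral>\<^sup>+ y. ennreal (phi y) * w y \<partial>lborel)
      = (\<integral>\<^sup>+ y. (\<integral>\<^sup>+ s. h y s \<partial>lborel) \<partial>lborel)"
  proof (rule nn_integral_cong)
    fix y
    have "ennreal (phi y) * w y = (\<integral>\<^sup>+ s. indicator {0<..<phi y} s * w y \<partial>lborel)"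
      by (subst ennreal_as_int_lt) (simp add: nn_integral_multc)
    also have "\<dots> = (\<integral>\<^sup>+ s. h y s \<partial>lborel)"
      by (rule nn_integral_cong) (auto simp: h_def indicator_def)
    finally show "ennreal (phi y) * w y = (\<integral>\<^sup>+ s. h y s \<partial>lborel)" .
  qed
  also have "\<dots> = (\<integral>\<^sup>+ s. (\<integral>\<^sup>+ y. h y s \<partial>lborel) \<partial>lborel)"
    by (rule lborel_pair.Fubini'[symmetric, OF hm])
  also have "\<dots> = (\<integral>\<^sup>+ s. indicator {0<..} s * (\<integral>\<^sup>+ y. indicator {y. s < phi y} y * w y \<partial>lborel) \<partial>lborel)"
  proof (rule nn_integral_cong)
    fix s :: real
    have "(\<integral>\<^sup>+ y. h y s \<partial>lborel) = (\<integral>\<^sup>+ y. indicator {0<..} s * (indicator {y. s < phi y} y * w y) \<partial>lborel)"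
      by (rule nn_integral_cong) (auto simp: h_def indicator_def)
    also have "\<dots> = indicator {0<..} s * (\<integral>\<^sup>+ y. indicator {y. s < phi y} y * w y \<partial>lborel)"
      by (rule nn_integral_cmult) measurable
    finally show "(\<integral>\<^sup>+ y. h y s \<partial>lborel) = indicator {0<..} s * (\<integral>\<^sup>+ y. indicator {y. s < phi y} y * w y \<partial>lborel)" .
  qed
  finally show ?thesis .
qed

lemma LC_le:
  fixes phi :: "real \<Rightarrow> real" and w :: "real \<Rightarrow> ennreal"
  assumes [measurable]: "phi \<in> borel_measurable borel" "w \<in> borel_measurable borel"
  shows "(\<integral>\<^sup>+ y. ennreal (phi y) * w y \<partial>lborel)
     = (\<integral>\<^sup>+ s. indicator {0<..} s * (\<integral>\<^sup>+ y. indicator {y. s \<le> phi y} y * w y \<partial>lborel) \<partial>lborel)"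
proof -
  define h where "h y s = (if 0 < s \<and> s \<le> phi y then w y else 0)" for y s :: real
  have [measurable]: "phi \<in> borel_measurable lborel" "w \<in> borel_measurable lborel" by simp_all
  have hm: "(\<lambda>(y,s). h y s) \<in> borel_measurable (lborel \<Otimes>\<^sub>M lborel)"
    unfolding h_def by measurable
  have "(\<integral>\<^sup>+ y. ennreal (phi y) * w y \<partial>lborel)
      = (\<integral>\<^sup>+ y. (\<integral>\<^sup>+ s. h y s \<partial>lborel) \<partial>lborel)"
  proof (rule nn_integral_cong)
    fix y
    have "ennreal (phi y) * w y = (\<integral>\<^sup>+ s. indicator {0<..phi y} s * w y \<partial>lborel)"
      by (subst ennreal_as_int_le) (simp add: nn_integral_multc)
    also have "\<dots> = (\<integral>\<^sup>+ s. h y s \<partial>lborel)"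
      by (rule nn_integral_cong) (auto simp: h_def indicator_def)
    finally show "ennreal (phi y) * w y = (\<integral>\<^sup>+ s. h y s \<partial>lborel)" .
  qed
  also have "\<dots> = (\<integral>\<^sup>+ s. (\<integral>\<^sup>+ y. h y s \<partial>lborel) \<partial>lborel)"
    by (rule lborel_pair.Fubini'[symmetric, OF hm])
  also have "\<dots> = (\<integral>\<^sup>+ s. indicator {0<..} s * (\<integral>\<^sup>+ y. indicator {y. s \<le> phi y} y * w y \<partial>lborel) \<partial>lborel)"
  proof (rule nn_integral_cong)
    fix s :: real
    have "(\<integral>\<^sup>+ y. h y s \<partial>lborel) = (\<integral>\<^sup>+ y. indicator {0<..} s * (indicator {y. s \<le> phi y} y * w y) \<partial>lborel)"
      by (rule nn_integral_cong) (auto simp: h_def indicator_def)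
    also have "\<dots> = indicator {0<..} s * (\<integral>\<^sup>+ y. indicator {y. s \<le> phi y} y * w y \<partial>lborel)"
      by (rule nn_integral_cmult) measurable
    finally show "(\<integral>\<^sup>+ y. h y s \<partial>lborel) = indicator {0<..} s * (\<integral>\<^sup>+ y. indicator {y. s \<le> phi y} y * w y \<partial>lborel)" .
  qed
  finally show ?thesis .
qed

lemma conv_HE:
  assumes B: "B \<in> sets borel" "B \<subseteq> {-pi..pi}" and E: "E \<in> sets borel" "E \<subseteq> {-pi..pi}"
  shows "(\<integral>\<^sup>+ y. indicator B y * ennreal (HE E y) \<partial>lborel) = ennreal (set_lebesgue_integral lborel B (HE E))"
proof -
  interpret bset E using E by unfold_locales
  have "(\<integral>\<^sup>+ y. indicator B y * ennreal (HE E y) \<partial>lborel) = (\<integral>\<^sup>+ y. ennreal (indicator B y * HE E y) \<partial>lborel)"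
    by (rule nn_integral_cong) (auto simp: indicator_def)
  also have "\<dots> = ennreal (LINT y|lborel. indicator B y * HE E y)"
  proof (rule nn_integral_eq_integral)
    show "integrable lborel (\<lambda>y. indicator B y * HE E y)"
      using si_cont[OF HE_cont B] unfolding set_integrable_def by simp
    show "AE y in lborel. 0 \<le> indicator B y * HE E y"
      by (rule AE_I2) (use B HE_nonneg in \<open>auto simp: indicator_def\<close>)
  qed
  finally show ?thesis unfolding set_lebesgue_integral_def by simp
qed

lemma HE_meas:
  assumes E: "E \<in> sets borel" "E \<subseteq> {-pi..pi}"
  shows "(\<lambda>y. ennreal (HE E y)) \<in> borel_measurable borel"
proof -
  interpret bset E using E by unfold_locales
  have "HE E \<in> borel_measurable borel" by (rule borel_measurable_continuous_onI[OF HE_cont])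
  then show ?thesis by measurable
qed

context fsetup
begin

lemma meas_eq_m:
  assumes s: "0 < s"
  shows "measure lborel {y \<in> {-pi<..<pi}. s < f y} = mfun f s"
proof -
  define A C where "A = {y \<in> {-pi<..<pi}. s < f y}" "C = {x \<in> {-pi..pi}. s < f x}"
  have Ab: "A \<in> sets borel" unfolding A_C_def by measurable
  have Cb: "C \<in> sets borel" unfolding A_C_def by measurable
  have "C - A \<subseteq> {-pi, pi}" unfolding A_C_def by auto
  then have "countable (C - A)" by (rule countable_subset) auto
  moreover have "C - A \<in> sets borel" using Ab Cb by auto
  ultimately have N: "C - A \<in> null_sets lborel" by (intro countable_imp_null_set_lborel)
  have "C = A \<union> (C - A)" unfolding A_C_def by auto
  then have "measure lborel C = measure lborel (A \<union> (C - A))" by simp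
  also have "\<dots> = measure lborel A" by (rule measure_Un_null_set) (use Ab N in auto)
  finally show ?thesis unfolding mfun_def A_C_def by simp
qed

lemma AC:
  assumes f0: "AE y in lborel. y \<notin> {-pi<..<pi} \<longrightarrow> f y = 0"
    and E: "E \<in> sets borel" "E \<subseteq> {-pi..pi}"
  shows "(\<integral>\<^sup>+ y. ennreal (f y) * ennreal (HE E y) \<partial>lborel)
     \<le> (\<integral>\<^sup>+ y. ennreal (gfun y) * ennreal (HE {-measure lborel E/2..measure lborel E/2} y) \<partial>lborel)"
proof -
  define t where "t = measure lborel E"
  define I where "I = {-t/2..t/2}"
  have t02: "0 \<le> t" "t \<le> 2*pi" unfolding t_def using fin_sub[OF E] by auto
  have Ib: "I \<in> sets borel" "I \<subseteq> {-pi..pi}" unfolding I_def using t02 by auto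
  have [measurable]: "(\<lambda>y. ennreal (HE E y)) \<in> borel_measurable borel" by (rule HE_meas[OF E])
  have [measurable]: "(\<lambda>y. ennreal (HE I y)) \<in> borel_measurable borel" by (rule HE_meas[OF Ib])
  have "(\<integral>\<^sup>+ y. ennreal (f y) * ennreal (HE E y) \<partial>lborel)
      = (\<integral>\<^sup>+ y. ennreal (indicator {-pi<..<pi} y * f y) * ennreal (HE E y) \<partial>lborel)"
    by (rule nn_integral_cong_AE) (use f0 in \<open>eventually_elim, auto simp: indicator_def\<close>)
  also have "\<dots> = (\<integral>\<^sup>+ s. indicator {0<..} s * (\<integral>\<^sup>+ y. indicator {y. s < indicator {-pi<..<pi} y * f y} y * ennreal (HE E y) \<partial>lborel) \<partial>lborel)"
    by (rule LC_lt) measurable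
  also have "\<dots> \<le> (\<integral>\<^sup>+ s. indicator {0<..} s * (\<integral>\<^sup>+ y. indicator {y. s \<le> gfun y} y * ennreal (HE I y) \<partial>lborel) \<partial>lborel)"
  proof (rule nn_integral_mono)
    fix s :: real
    show "indicator {0<..} s * (\<integral>\<^sup>+ y. indicator {y. s < indicator {-pi<..<pi} y * f y} y * ennreal (HE E y) \<partial>lborel)
       \<le> indicator {0<..} s * (\<integral>\<^sup>+ y. indicator {y. s \<le> gfun y} y * ennreal (HE I y) \<partial>lborel)"
    proof (cases "0 < s")
      case False then show ?thesis by simp
    next
      case True
      define A where "A = {y \<in> {-pi<..<pi}. s < f y}"
      define a where "a = measure lborel A"
      have Aeq: "{y. s < indicator {-pi<..<pi} y * f y} = A"
        unfolding A_def using True by (auto simp: indicator_def)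
      have Ab: "A \<in> sets borel" "A \<subseteq> {-pi..pi}" unfolding A_def by auto
      have am: "a = mfun f s" unfolding a_def A_def by (rule meas_eq_m[OF True])
      have a02: "0 \<le> a" "a \<le> 2*pi" unfolding a_def using fin_sub[OF Ab] by auto
      have Kb: "{-a/2..a/2} \<in> sets borel" "{-a/2..a/2} \<subseteq> {-pi..pi}" using a02 by auto
      have "(\<integral>\<^sup>+ y. indicator {y. s < indicator {-pi<..<pi} y * f y} y * ennreal (HE E y) \<partial>lborel)
          = ennreal (set_lebesgue_integral lborel A (HE E))"
        unfolding Aeq by (rule conv_HE[OF Ab E])
      also have "\<dots> \<le> ennreal (set_lebesgue_integral lborel {-a/2..a/2} (HE I))"
        using KEY[OF Ab E] unfolding a_def I_def t_def by (rule ennreal_leI)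
      also have "\<dots> = (\<integral>\<^sup>+ y. indicator {-a/2..a/2} y * ennreal (HE I y) \<partial>lborel)"
        by (rule conv_HE[OF Kb Ib, symmetric])
      also have "\<dots> = (\<integral>\<^sup>+ y. indicator ({-a/2<..<a/2} - {0}) y * ennreal (HE I y) \<partial>lborel)"
      proof (rule nn_integral_cong_AE)
        have "AE y in lborel. y \<noteq> -a/2" "AE y in lborel. y \<noteq> a/2" "AE y in lborel. y \<noteq> 0"
          by (rule AE_lborel_singleton)+
        then show "AE y in lborel. indicator {-a/2..a/2} y * ennreal (HE I y) = indicator ({-a/2<..<a/2} - {0}) y * ennreal (HE I y)"
          by eventually_elim (auto simp: indicator_def)
      qed
      also have "\<dots> \<le> (\<integral>\<^sup>+ y. indicator {y. s \<le> gfun y} y * ennreal (HE I y) \<partial>lborel)"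
      proof (rule nn_integral_mono)
        fix y
        show "indicator ({-a/2<..<a/2} - {0}) y * ennreal (HE I y) \<le> indicator {y. s \<le> gfun y} y * ennreal (HE I y)"
        proof (cases "y \<in> {-a/2<..<a/2} - {0}")
          case False then show ?thesis by simp
        next
          case yin: True
          have "y \<in> {-pi<..<pi} - {0}" using yin a02 by auto
          moreover have "2*\<bar>y\<bar> < mfun f s" using yin am by auto
          ultimately have "s \<le> gfun y" by (intro gfun_lower True)
          then show ?thesis using yin by simp
        qed
      qed
      finally show ?thesis using True by simp
    qed
  qed
  also have "\<dots> = (\<integral>\<^sup>+ y. ennreal (gfun y) * ennreal (HE I y) \<partial>lborel)"
    by (rule LC_le[symmetric]) measurable
  finally show ?thesis unfolding I_def t_def .
qed

lemma gfun_fin: "(\<integral>\<^sup>+ y. ennreal (gfun y) \<partial>lborel) < \<infinity>"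
proof -
  have "(\<integral>\<^sup>+ y. ennreal (gfun y) \<partial>lborel) = (\<integral>\<^sup>+ y. ennreal (gfun y) * 1 \<partial>lborel)" by simp
  also have "\<dots> = (\<integral>\<^sup>+ s. indicator {0<..} s * (\<integral>\<^sup>+ y. indicator {y. s < gfun y} y * 1 \<partial>lborel) \<partial>lborel)"
    by (rule LC_lt) measurable
  also have "\<dots> \<le> (\<integral>\<^sup>+ s. indicator {0<..} s * (\<integral>\<^sup>+ y. indicator {y. s < indicator {-pi..pi} y * f y} y * 1 \<partial>lborel) \<partial>lborel)"
  proof (rule nn_integral_mono)
    fix s :: real
    show "indicator {0<..} s * (\<integral>\<^sup>+ y. indicator {y. s < gfun y} y * 1 \<partial>lborel)
      \<le> indicator {0<..} s * (\<integral>\<^sup>+ y. indicator {y. s < indicator {-pi..pi} y * f y} y * 1 \<partial>lborel)"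
    proof (cases "0 < s")
      case False then show ?thesis by simp
    next
      case True
      define m where "m = mfun f s"
      have sub: "{y. s < gfun y} \<subseteq> {-m/2<..<m/2} \<union> {0}"
      proof
        fix y assume y: "y \<in> {y. s < gfun y}"
        show "y \<in> {-m/2<..<m/2} \<union> {0}"
        proof (cases "y \<in> {-pi<..<pi} - {0}")
          case True
          have "\<not> mfun f s \<le> 2*\<bar>y\<bar>" using gfun_upper[OF True] y by force
          then show ?thesis unfolding m_def by auto
        next
          case False
          then have "y = 0 \<or> y \<notin> {-pi<..<pi}" by auto
          then show ?thesis using y gfun_out \<open>0 < s\<close> by auto
        qed
      qed
      have m0: "0 \<le> m" unfolding m_def by (rule m_le)
      have sb: "{y. s < gfun y} \<in> sets borel" by measurable
      have "(\<integral>\<^sup>+ y. indicator {y. s < gfun y} y * 1 \<partial>lborel) = emeasure lborel {y. s < gfun y}"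
        using sb by simp
      also have "\<dots> \<le> emeasure lborel ({-m/2<..<m/2} \<union> {0})" by (rule emeasure_mono[OF sub]) auto
      also have "\<dots> = emeasure lborel {-m/2<..<m/2}"
        by (rule emeasure_Un_null_set) auto
      also have "\<dots> = ennreal m" using m0 by (simp add: emeasure_lborel_Ioo)
      also have "\<dots> = emeasure lborel {x \<in> {-pi..pi}. s < f x}"
        unfolding m_def mfun_def using fin_sub[OF lev_sets] by (simp add: emeasure_eq_measure2)
      also have "\<dots> = (\<integral>\<^sup>+ y. indicator {y. s < indicator {-pi..pi} y * f y} y * 1 \<partial>lborel)"
      proof -
        have "{y. s < indicator {-pi..pi} y * f y} = {x \<in> {-pi..pi}. s < f x}"
          using True by (auto simp: indicator_def)
        then show ?thesis by simp
      qed
      finally show ?thesis by (simp add: mult_left_mono)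
    qed
  qed
  also have "\<dots> = (\<integral>\<^sup>+ y. ennreal (indicator {-pi..pi} y * f y) * 1 \<partial>lborel)"
    by (rule LC_lt[symmetric]) measurable
  also have "\<dots> = ennreal (set_lebesgue_integral lborel {-pi..pi} f)"
    unfolding set_lebesgue_integral_def
    by simp (rule nn_integral_eq_integral, use f_int in \<open>auto simp: set_integrable_def f_nonneg\<close>)
  also have "\<dots> < \<infinity>" by simp
  finally show ?thesis .
qed

lemma sym_sets: "sets (sym_measure f M) = sets borel"
proof -
  have "sigma_algebra (space borel) (sets borel)" by (rule sets.sigma_algebra_axioms)
  then have "sigma_algebra UNIV (sets borel)" by simp
  then show ?thesis unfolding sym_measure_def by (rule sigma_algebra.sets_measure_of_eq)
qed

lemma sym_emeasure:
  assumes M: "0 \<le> M" and A: "A \<in> sets borel"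
  shows "emeasure (sym_measure f M) A = emeasure (density lborel (\<lambda>x. ennreal (gfun x))) A
      + emeasure (density (return borel 0) (\<lambda>_. ennreal M)) A"
proof -
  define N1 where "N1 = density lborel (\<lambda>x. ennreal (gfun x))"
  define N2 where "N2 = density (return borel (0::real)) (\<lambda>_. ennreal M)"
  define mu where "mu A = (\<integral>\<^sup>+x. ennreal (indicator {-pi<..<pi} x * sym_rearr f x) * indicator A x \<partial>lborel)
          + ennreal M * indicator A (0::real)" for A
  have s1: "sets N1 = sets borel" "sets N2 = sets borel" unfolding N1_def N2_def by auto
  have e: "mu B = emeasure N1 B + emeasure N2 B" if B: "B \<in> sets borel" for B
  proof -
    have "emeasure N1 B = (\<integral>\<^sup>+x. ennreal (gfun x) * indicator B x \<partial>lborel)"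
      unfolding N1_def using B by (subst emeasure_density) auto
    moreover have "emeasure N2 B = ennreal M * indicator B (0::real)"
      unfolding N2_def using B by (subst emeasure_density_const) auto
    ultimately show ?thesis unfolding mu_def gfun_def by simp
  qed
  have sa: "sigma_algebra UNIV (sets (borel::real measure))"
    using sets.sigma_algebra_axioms[of "borel::real measure"] by simp
  have pos: "positive (sets borel) mu" unfolding positive_def mu_def by simp
  have ca: "countably_additive (sets borel) mu"
    unfolding countably_additive_def
  proof (intro allI impI)
    fix F :: "nat \<Rightarrow> real set"
    assume F: "range F \<subseteq> sets borel" "disjoint_family F" "\<Union> (range F) \<in> sets borel"
    have "(\<Sum>i. mu (F i)) = (\<Sum>i. emeasure N1 (F i) + emeasure N2 (F i))"
      using F e by auto
    also have "\<dots> = (\<Sum>i. emeasure N1 (F i)) + (\<Sum>i. emeasure N2 (F i))"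
      by (rule suminf_add[symmetric]) (auto intro: summableI)
    also have "\<dots> = emeasure N1 (\<Union> (range F)) + emeasure N2 (\<Union> (range F))"
      using F s1 by (simp add: suminf_emeasure)
    also have "\<dots> = mu (\<Union> (range F))" using e F by simp
    finally show "(\<Sum>i. mu (F i)) = mu (\<Union> (range F))" .
  qed
  have "emeasure (sym_measure f M) A = mu A"
    unfolding sym_measure_def mu_def[abs_def] using emeasure_measure_of_sigma[OF sa pos ca A]
    unfolding mu_def by simp
  then show ?thesis using e[OF A] unfolding N1_def N2_def by simp
qed

lemma sym_nn:
  assumes M: "0 \<le> M" and g: "g \<in> borel_measurable borel"
  shows "integral\<^sup>N (sym_measure f M) g = (\<integral>\<^sup>+x. ennreal (gfun x) * g x \<partial>lborel) + ennreal M * g 0"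
proof -
  have "integral\<^sup>N (sym_measure f M) g = integral\<^sup>N (density lborel (\<lambda>x. ennreal (gfun x))) g
      + integral\<^sup>N (density (return borel 0) (\<lambda>_. ennreal M)) g + integral\<^sup>N (null_measure borel) g"
    by (rule nn_integral_sum3[OF sym_sets _ _ _ _ g]) (auto simp: sym_emeasure[OF M])
  also have "integral\<^sup>N (density lborel (\<lambda>x. ennreal (gfun x))) g = (\<integral>\<^sup>+x. ennreal (gfun x) * g x \<partial>lborel)"
    using g by (subst nn_integral_density) auto
  also have "integral\<^sup>N (density (return borel 0) (\<lambda>_. ennreal M)) g = ennreal M * g 0"
    using g by (subst nn_integral_density) (auto simp: nn_integral_return)
  finally show ?thesis by simp
qed

end

theorem lemma5p8:
  fixes \<mu> \<sigma> \<delta> :: "real measure" and f :: "real \<Rightarrow> real" and t :: real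
  assumes sets_mu: "sets \<mu> = sets borel"
      and finite_mu: "finite_measure \<mu>"
      and supp_mu: "emeasure \<mu> (UNIV - {-pi<..<pi}) = 0"
      and nonzero_mu: "emeasure \<mu> {-pi<..<pi} \<noteq> 0"
      and f_meas: "f \<in> borel_measurable borel"
      and f_nonneg: "\<And>x. f x \<ge> 0"
      and f_int: "set_integrable lborel {-pi..pi} f"
      and sets_sigma: "sets \<sigma> = sets borel"
      and sigma_atomless: "\<And>x. emeasure \<sigma> {x} = 0"
      and sigma_sing: "\<exists>N \<in> sets borel. emeasure lborel N = 0 \<and> emeasure \<sigma> (UNIV - N) = 0"
      and sets_delta: "sets \<delta> = sets borel"
      and delta_atomic: "\<exists>C. countable C \<and> emeasure \<delta> (UNIV - C) = 0"
      and decomp: "\<And>A. A \<in> sets borel \<Longrightarrow>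
          emeasure \<mu> A = (\<integral>\<^sup>+x. ennreal (f x) * indicator A x \<partial>lborel) + emeasure \<sigma> A + emeasure \<delta> A"
      and t: "t \<in> {0..2*pi}"
  shows "star_fun (u_pot \<mu>) t
         \<le> star_fun (u_pot (sym_measure f (measure \<sigma> {-pi<..<pi} + measure \<delta> {-pi<..<pi}))) t"
proof -
  interpret fsetup f using f_meas f_nonneg f_int by unfold_locales auto
  define S where "S = {-pi<..<(pi::real)}"
  define M where "M = measure \<sigma> S + measure \<delta> S"
  define \<mu>s where "\<mu>s = sym_measure f M"
  have Sb: "S \<in> sets borel" "UNIV - S \<in> sets borel" unfolding S_def by auto
  have dec0: "(\<integral>\<^sup>+x. ennreal (f x) * indicator (UNIV - S) x \<partial>lborel) = 0"
    "emeasure \<sigma> (UNIV - S) = 0" "emeasure \<delta> (UNIV - S) = 0"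
    using decomp[OF Sb(2)] supp_mu unfolding S_def by auto
  have f0: "AE y in lborel. y \<notin> S \<longrightarrow> f y = 0"
  proof -
    have "AE y in lborel. ennreal (f y) * indicator (UNIV - S) y = 0"
      using dec0(1) by (subst nn_integral_0_iff_AE[symmetric]) (use Sb in auto)
    then show ?thesis by eventually_elim (use f_nonneg in \<open>auto simp: indicator_def\<close>)
  qed
  interpret mu: finite_measure \<mu> by (rule finite_mu)
  have muS: "emeasure \<mu> S < \<infinity>" using mu.emeasure_finite[of S] by (simp add: less_top[symmetric])
  have sigS: "emeasure \<sigma> S < \<infinity>" "emeasure \<delta> S < \<infinity>"
  proof -
    have "emeasure \<sigma> S \<le> emeasure \<mu> S" "emeasure \<delta> S \<le> emeasure \<mu> S"
      using decomp[OF Sb(1)] by (auto simp: add_ac)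
    then show "emeasure \<sigma> S < \<infinity>" "emeasure \<delta> S < \<infinity>" using muS by auto
  qed
  have sigE: "emeasure \<sigma> S = ennreal (measure \<sigma> S)" "emeasure \<delta> S = ennreal (measure \<delta> S)"
    using sigS by (auto simp: emeasure_eq_ennreal_measure)
  have M0: "0 \<le> M" unfolding M_def by simp
  have eM: "ennreal M = emeasure \<sigma> S + emeasure \<delta> S"
    unfolding M_def sigE by (simp add: ennreal_plus)
  have mu_conc: "emeasure \<mu> (UNIV - {-pi..pi}) = 0"
  proof -
    have "emeasure \<mu> (UNIV - {-pi..pi}) \<le> emeasure \<mu> (UNIV - S)"
      by (rule emeasure_mono) (use sets_mu Sb in \<open>auto simp: S_def\<close>)
    then show ?thesis using supp_mu unfolding S_def by simp
  qed
  have s_sets: "sets \<mu>s = sets borel" unfolding \<mu>s_def by (rule sym_sets)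
  have s_nn: "integral\<^sup>N \<mu>s g = (\<integral>\<^sup>+x. ennreal (gfun x) * g x \<partial>lborel) + ennreal M * g 0"
    if "g \<in> borel_measurable borel" for g
    unfolding \<mu>s_def by (rule sym_nn[OF M0 that])
  have s_fin: "finite_measure \<mu>s"
  proof (rule finite_measureI)
    have sp: "space \<mu>s = UNIV" using sets_eq_imp_space_eq[OF s_sets] by simp
    have "emeasure \<mu>s (space \<mu>s) = integral\<^sup>N \<mu>s (\<lambda>_. 1)"
      by simp
    also have "\<dots> = (\<integral>\<^sup>+x. ennreal (gfun x) \<partial>lborel) + ennreal M"
      using s_nn[of "\<lambda>_. 1"] by (simp del: nn_integral_const)
    also have "\<dots> < \<infinity>" using gfun_fin by simp
    finally show "emeasure \<mu>s (space \<mu>s) \<noteq> \<infinity>" by simp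
  qed
  have s_conc: "emeasure \<mu>s (UNIV - {-pi..pi}) = 0"
  proof -
    have b: "UNIV - {-pi..pi} \<in> sets (borel::real measure)" by auto
    have "emeasure \<mu>s (UNIV - {-pi..pi}) = integral\<^sup>N \<mu>s (indicator (UNIV - {-pi..pi}))"
      using b s_sets by simp
    also have "\<dots> = (\<integral>\<^sup>+x. ennreal (gfun x) * indicator (UNIV - {-pi..pi}) x \<partial>lborel) + ennreal M * indicator (UNIV - {-pi..pi}) (0::real)"
      by (rule s_nn) (use b in simp)
    also have "\<dots> = 0"
    proof -
      have "ennreal (gfun x) * indicator (UNIV - {-pi..pi}) x = 0" for x
      proof (cases "x \<in> {-pi..pi}")
        case False
        then have "x \<notin> {-pi<..<pi}" by auto
        then show ?thesis using gfun_out[of x] by simp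
      qed simp
      then have z: "(\<lambda>x. ennreal (gfun x) * indicator (UNIV - {-pi..pi}) x) = (\<lambda>_. 0)" by (intro ext)
      have "indicator (UNIV - {-pi..pi}) (0::real) = (0::ennreal)" by simp
      then show ?thesis unfolding z by simp
    qed
    finally show ?thesis .
  qed
  have main: "(LINT x:E|lborel. u_pot \<mu> x) \<le> (LINT x:{-measure lborel E/2..measure lborel E/2}|lborel. u_pot \<mu>s x)"
    if E: "E \<in> sets borel" "E \<subseteq> {-pi..pi}" for E
  proof -
    define tt where "tt = measure lborel E"
    define I where "I = {-tt/2..tt/2}"
    have t02: "0 \<le> tt" "tt \<le> 2*pi" unfolding tt_def using fin_sub[OF E] by auto
    have Ib: "I \<in> sets borel" "I \<subseteq> {-pi..pi}" unfolding I_def using t02 by auto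
    have [measurable]: "(\<lambda>y. ennreal (HE E y)) \<in> borel_measurable borel" by (rule HE_meas[OF E])
    have [measurable]: "(\<lambda>y. ennreal (HE I y)) \<in> borel_measurable borel" by (rule HE_meas[OF Ib])
    have L: "integral\<^sup>N \<mu> (\<lambda>y. ennreal (HE E y)) = integral\<^sup>N (density lborel (\<lambda>x. ennreal (f x))) (\<lambda>y. ennreal (HE E y))
       + integral\<^sup>N \<sigma> (\<lambda>y. ennreal (HE E y)) + integral\<^sup>N \<delta> (\<lambda>y. ennreal (HE E y))"
    proof (rule nn_integral_sum3[OF sets_mu _ sets_sigma sets_delta])
      show "sets (density lborel (\<lambda>x. ennreal (f x))) = sets borel" by simp
      fix A :: "real set" assume A: "A \<in> sets borel"
      show "emeasure \<mu> A = emeasure (density lborel (\<lambda>x. ennreal (f x))) A + emeasure \<sigma> A + emeasure \<delta> A"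
        using decomp[OF A] A by (subst emeasure_density) auto
    qed measurable
    have L1: "integral\<^sup>N (density lborel (\<lambda>x. ennreal (f x))) (\<lambda>y. ennreal (HE E y))
        = (\<integral>\<^sup>+ y. ennreal (f y) * ennreal (HE E y) \<partial>lborel)"
      by (subst nn_integral_density) auto
    have sing: "ennreal (HE E y) \<le> ennreal (HE I 0) * indicator S y" if "y \<in> S" for y
    proof -
      have "HE E y \<le> HE I 0" unfolding I_def tt_def by (rule SING[OF E]) (use that in \<open>auto simp: S_def\<close>)
      then show ?thesis using that by (simp add: ennreal_leI)
    qed
    have L2: "integral\<^sup>N K (\<lambda>y. ennreal (HE E y)) \<le> ennreal (HE I 0) * emeasure K S"
      if K: "sets K = sets borel" "emeasure K (UNIV - S) = 0" for K
    proof -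
      have sp: "space K = UNIV" using sets_eq_imp_space_eq[OF K(1)] by simp
      have AES: "AE y in K. y \<in> S"
        by (rule AE_I'[of "UNIV - S"]) (use K Sb in \<open>auto simp: sp\<close>)
      have "AE y in K. ennreal (HE E y) \<le> ennreal (HE I 0) * indicator S y"
        using AES by eventually_elim (rule sing)
      then have "integral\<^sup>N K (\<lambda>y. ennreal (HE E y)) \<le> integral\<^sup>N K (\<lambda>y. ennreal (HE I 0) * indicator S y)"
        by (rule nn_integral_mono_AE)
      also have "\<dots> = ennreal (HE I 0) * emeasure K S"
        using K Sb by (subst nn_integral_cmult_indicator) auto
      finally show ?thesis .
    qed
    have AC': "(\<integral>\<^sup>+ y. ennreal (f y) * ennreal (HE E y) \<partial>lborel)
        \<le> (\<integral>\<^sup>+ y. ennreal (gfun y) * ennreal (HE I y) \<partial>lborel)"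
      unfolding I_def tt_def by (rule AC) (use f0 E in \<open>auto simp: S_def\<close>)
    have R: "integral\<^sup>N \<mu>s (\<lambda>y. ennreal (HE I y)) = (\<integral>\<^sup>+ y. ennreal (gfun y) * ennreal (HE I y) \<partial>lborel)
        + ennreal M * ennreal (HE I 0)"
      by (rule s_nn) measurable
    have cmp: "integral\<^sup>N \<mu> (\<lambda>y. ennreal (HE E y)) \<le> integral\<^sup>N \<mu>s (\<lambda>y. ennreal (HE I y))"
    proof -
      have "integral\<^sup>N \<mu> (\<lambda>y. ennreal (HE E y)) \<le> (\<integral>\<^sup>+ y. ennreal (gfun y) * ennreal (HE I y) \<partial>lborel)
          + ennreal (HE I 0) * emeasure \<sigma> S + ennreal (HE I 0) * emeasure \<delta> S"
        unfolding L L1 using AC' L2[OF sets_sigma dec0(2)] L2[OF sets_delta dec0(3)]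
        by (intro add_mono) auto
      also have "\<dots> = integral\<^sup>N \<mu>s (\<lambda>y. ennreal (HE I y))"
        unfolding R eM by (simp add: distrib_left mult.commute add.assoc)
      finally show ?thesis .
    qed
    have fin: "integral\<^sup>N \<mu>s (\<lambda>y. ennreal (HE I y)) \<le> ennreal (pi^2 * measure \<mu>s UNIV)"
      by (rule pot_int(2)[OF s_sets s_fin s_conc Ib])
    have "(LINT x:E|lborel. u_pot \<mu> x) = enn2real (integral\<^sup>N \<mu> (\<lambda>y. ennreal (HE E y)))"
      by (rule pot_int(1)[OF sets_mu finite_mu mu_conc E])
    also have "\<dots> \<le> enn2real (integral\<^sup>N \<mu>s (\<lambda>y. ennreal (HE I y)))"
      by (rule enn2real_mono[OF cmp]) (use fin in \<open>simp add: le_less_trans[OF fin]\<close>)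
    also have "\<dots> = (LINT x:I|lborel. u_pot \<mu>s x)"
      by (rule pot_int(1)[OF s_sets s_fin s_conc Ib, symmetric])
    finally show ?thesis unfolding I_def tt_def .
  qed
  define SU where "SU = {(LINT x:E|lborel. u_pot \<mu> x) | E. E \<in> sets borel \<and> E \<subseteq> {-pi..pi} \<and> measure lborel E = t}"
  define SV where "SV = {(LINT x:E|lborel. u_pot \<mu>s x) | E. E \<in> sets borel \<and> E \<subseteq> {-pi..pi} \<and> measure lborel E = t}"
  have t02: "0 \<le> t" "t \<le> 2*pi" using t by auto
  have It: "{-t/2..t/2} \<in> sets borel" "{-t/2..t/2} \<subseteq> {-pi..pi}" "measure lborel {-t/2..t/2} = t"
    using t02 by auto
  have inSV: "(LINT x:{-t/2..t/2}|lborel. u_pot \<mu>s x) \<in> SV"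
    unfolding SV_def using It by blast
  have bdd: "bdd_above SV"
  proof -
    have "v \<le> pi^2 * measure \<mu>s UNIV" if "v \<in> SV" for v
    proof -
      obtain E where E: "E \<in> sets borel" "E \<subseteq> {-pi..pi}" "v = (LINT x:E|lborel. u_pot \<mu>s x)"
        using \<open>v \<in> SV\<close> unfolding SV_def by blast
      have "v = enn2real (integral\<^sup>N \<mu>s (\<lambda>y. ennreal (HE E y)))"
        using pot_int(1)[OF s_sets s_fin s_conc E(1,2)] E(3) by simp
      also have "\<dots> \<le> enn2real (ennreal (pi^2 * measure \<mu>s UNIV))"
        by (rule enn2real_mono[OF pot_int(2)[OF s_sets s_fin s_conc E(1,2)]]) simp
      also have "\<dots> = pi^2 * measure \<mu>s UNIV" by simp
      finally show ?thesis .
    qed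
    then show ?thesis unfolding bdd_above_def by blast
  qed
  have neU: "SU \<noteq> {}"
  proof -
    have "{-pi..-pi+t} \<in> sets borel" "{-pi..-pi+t} \<subseteq> {-pi..pi}" "measure lborel {-pi..-pi+t} = t"
      using t02 by auto
    then show ?thesis unfolding SU_def by blast
  qed
  have "Sup SU \<le> (LINT x:{-t/2..t/2}|lborel. u_pot \<mu>s x)"
  proof (rule cSup_least[OF neU])
    fix v assume "v \<in> SU"
    then obtain E where E: "E \<in> sets borel" "E \<subseteq> {-pi..pi}" "measure lborel E = t" "v = (LINT x:E|lborel. u_pot \<mu> x)"
      unfolding SU_def by blast
    show "v \<le> (LINT x:{-t/2..t/2}|lborel. u_pot \<mu>s x)" using main[OF E(1,2)] E(3,4) by simp
  qed
  also have "\<dots> \<le> Sup SV" by (rule cSup_upper[OF inSV bdd])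
  finally show ?thesis unfolding star_fun_def SU_def SV_def \<mu>s_def M_def S_def .
qed

end
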